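(* Let ${\cal G}$ be a closed graph (as in the context) and let $1\le\nu\le\infty$. Then $$\widetilde I'_\nu({\cal G})=\widetilde S_\nu({\cal G})\qquad\text{and}\qquad \widetilde I_\nu({\cal G})=\widetilde S_{',\nu}({\cal G}),$$ and moreover $\widetilde I_\nu({\cal G})\le \widetilde I'_\nu({\cal G})\le 2^{1/\nu}\widetilde I_\nu({\cal G})$.
   Context: A graph ${\cal G}$ consists of an undirected graph $(V,E)$ (multiple edges and self-loops allowed), a length $\ell_e>0$ per edge, a set $\partial{\cal G}\subseteq V$ of boundary vertices, a vertex measure ${\cal V}$ (supported on $V$, ${\cal V}(v)>0$) and an edge measure ${\cal E}$ (zero on vertices, equal to $a_e>0$ times Lebesgue measure on the interior of edge $e$); ${\cal G}$ is identified with its geometric realization (a closed interval of length $\ell_e$ joining the endpoints of each edge $e$). A closed graph is one with finitely many vertices and edges and $\partial{\cal G}=\emptyset$. $C^1_{\rm Dir}({\cal G})$ is the set of continuous functions on ${\cal G}$ that are uniformly continuously differentiable on each open edge interval, have support in finitely many vertices and edges, and vanish on $\partial{\cal G}$. $\|f\|_q=(\int|f|^q\,d{\cal V})^{1/q}$ and $\|\nabla f\|_1=\int|\nabla f|\,d{\cal E}$ ($\nabla f$ is the derivative along edge interiors); $\nu'$ is the dual exponent, $1/\nu+1/\nu'=1$. For an open $\Omega\subseteq{\cal G}$ with finite topological boundary $\partial\Omega$, its area is ${\cal A}(\partial\Omega)=\sum_{x\in\partial\Omega\setminus V}a_{e(x)}+\sum_{v\in\partial\Omega\cap V}\sum_{e:\,v\in\overline{\Omega\cap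 e^\circ}}a_e$, where $e(x)$ is the edge containing $x$ and $e^\circ$ is the open interior of $e$. $\Omega$ is admissible if it is open, $\partial\Omega$ is finite and $\Omega\cap\partial{\cal G}=\emptyset$. ${\cal V}(\Omega)$ is the ${\cal V}$-measure of $\Omega$ and $\complement\Omega$ the complement. Define $\widetilde I_\nu({\cal G})=\inf_\Omega {\cal A}(\partial\Omega)\min({\cal V}(\Omega),{\cal V}(\complement\Omega))^{(1/\nu)-1}$ and $\widetilde I'_\nu({\cal G})=\inf_\Omega{\cal A}(\partial\Omega)\bigl({\cal V}(\Omega)^{1-\nu}+{\cal V}(\complement\Omega)^{1-\nu}\bigr)^{1/\nu}$, infima over admissible $\Omega$. Define $\widetilde S_\nu({\cal G})=\inf_{f\in C^1_{\rm Dir}({\cal G})}\|\nabla f\|_1/\min_{a\in\mathbb R}\|f-a\|_{\nu'}$. A measurable $f$ is split if ${\cal V}(\{f>0\})\le{\cal V}({\cal G})/2$ and ${\cal V}(\{f<0\})\le{\cal V}({\cal G})/2$; $\widetilde S_{',\nu}({\cal G})=\inf\{\|\nabla f\|_1/\|f\|_{\nu'}: f\in C^1_{\rm Dir}({\cal G}),\ f\text{ split}\}$. *)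

theory Defs
  imports "HOL-Analysis.Analysis"
begin

text \<open>A graph: vertex set, edge set, each edge with two (possibly equal) endpoints
  (multiple edges and self-loops allowed), a length per edge, a weight a_e per edge
  (the density of the edge measure), a vertex measure and a set of boundary vertices.\<close>

record ('v, 'e) mgraph =
  verts :: "'v set"
  edges :: "'e set"
  src   :: "'e \<Rightarrow> 'v"
  tgt   :: "'e \<Rightarrow> 'v"
  len   :: "'e \<Rightarrow> real"
  wt    :: "'e \<Rightarrow> real"
  vmeas :: "'v \<Rightarrow> real"
  bdry  :: "'v set"

definition closed_graph :: "('v, 'e) mgraph \<Rightarrow> bool" where
  "closed_graph G \<longleftrightarrow> finite (verts G) \<and> finite (edges G) \<and>
     (\<forall>e\<in>edges G. src G e \<in> verts G \<and> tgt G e \<in> verts G \<and> len G e > 0 \<and> wt G e > 0) \<and>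
     (\<forall>v\<in>verts G. vmeas G v > 0) \<and> bdry G = {}"

text \<open>Points of the geometric realization: a vertex, or an interior point of an edge
  at distance t from its (chosen) source endpoint, 0 < t < len e.\<close>

datatype ('v, 'e) gpoint = VertPt 'v | EdgePt 'e real

definition gpoints :: "('v, 'e) mgraph \<Rightarrow> ('v, 'e) gpoint set" where
  "gpoints G = VertPt ` verts G \<union> {EdgePt e t | e t. e \<in> edges G \<and> 0 < t \<and> t < len G e}"

definition edge_interior :: "('v, 'e) mgraph \<Rightarrow> 'e \<Rightarrow> ('v, 'e) gpoint set" where
  "edge_interior G e = {EdgePt e t | t. 0 < t \<and> t < len G e}"

fun point_edge :: "('v, 'e) gpoint \<Rightarrow> 'e" where
  "point_edge (EdgePt d s) = d"
| "point_edge (VertPt v) = undefined"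

text \<open>Open sets of the (quotient) topology of the geometric realization.\<close>

definition gopen :: "('v, 'e) mgraph \<Rightarrow> ('v, 'e) gpoint set \<Rightarrow> bool" where
  "gopen G U \<longleftrightarrow> U \<subseteq> gpoints G \<and>
     (\<forall>e\<in>edges G. open {t. 0 < t \<and> t < len G e \<and> EdgePt e t \<in> U}) \<and>
     (\<forall>v\<in>verts G. VertPt v \<in> U \<longrightarrow> (\<exists>\<epsilon>>0. \<forall>e\<in>edges G.
        (src G e = v \<longrightarrow> (\<forall>t. 0 < t \<and> t < \<epsilon> \<and> t < len G e \<longrightarrow> EdgePt e t \<in> U)) \<and>
        (tgt G e = v \<longrightarrow> (\<forall>t. 0 < t \<and> len G e - \<epsilon> < t \<and> t < len G e \<longrightarrow> EdgePt e t \<in> U))))"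

definition gclosure :: "('v, 'e) mgraph \<Rightarrow> ('v, 'e) gpoint set \<Rightarrow> ('v, 'e) gpoint set" where
  "gclosure G S = {x \<in> gpoints G. \<forall>U. gopen G U \<and> x \<in> U \<longrightarrow> U \<inter> S \<noteq> {}}"

definition gfrontier :: "('v, 'e) mgraph \<Rightarrow> ('v, 'e) gpoint set \<Rightarrow> ('v, 'e) gpoint set" where
  "gfrontier G S = gclosure G S \<inter> gclosure G (gpoints G - S)"

definition gcontinuous :: "('v, 'e) mgraph \<Rightarrow> (('v, 'e) gpoint \<Rightarrow> real) \<Rightarrow> bool" where
  "gcontinuous G f \<longleftrightarrow> (\<forall>U::real set. open U \<longrightarrow> gopen G {x \<in> gpoints G. f x \<in> U})"

definition vmeasure :: "('v, 'e) mgraph \<Rightarrow> ('v, 'e) gpoint set \<Rightarrow> real" where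
  "vmeasure G S = (\<Sum>v\<in>{v \<in> verts G. VertPt v \<in> S}. vmeas G v)"

definition area :: "('v, 'e) mgraph \<Rightarrow> ('v, 'e) gpoint set \<Rightarrow> real" where
  "area G \<Omega> =
     (\<Sum>x\<in>gfrontier G \<Omega> - range VertPt. wt G (point_edge x)) +
     (\<Sum>v\<in>{v. VertPt v \<in> gfrontier G \<Omega>}.
        \<Sum>e\<in>{e \<in> edges G. VertPt v \<in> gclosure G (\<Omega> \<inter> edge_interior G e)}. wt G e)"

definition admissible :: "('v, 'e) mgraph \<Rightarrow> ('v, 'e) gpoint set \<Rightarrow> bool" where
  "admissible G \<Omega> \<longleftrightarrow> gopen G \<Omega> \<and> finite (gfrontier G \<Omega>) \<and> \<Omega> \<inter> VertPt ` bdry G = {}"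

definition inv_exp :: "ereal \<Rightarrow> real" where
  "inv_exp \<nu> = (if \<nu> = \<infinity> then 0 else 1 / real_of_ereal \<nu>)"

definition dual_exp :: "ereal \<Rightarrow> ereal" where
  "dual_exp \<nu> = (if \<nu> = 1 then \<infinity> else if \<nu> = \<infinity> then 1
                  else ereal (real_of_ereal \<nu> / (real_of_ereal \<nu> - 1)))"

text \<open>The L^q norm with respect to the vertex measure (q \<in> [1,\<infinity>]); for q = \<infinity> it is the
  essential supremum, i.e. the maximum over the vertices (all of positive measure).\<close>

definition vnorm :: "('v, 'e) mgraph \<Rightarrow> ereal \<Rightarrow> (('v, 'e) gpoint \<Rightarrow> real) \<Rightarrow> real" where
  "vnorm G q f = (if q = \<infinity> then Max (insert 0 ((\<lambda>v. \<bar>f (VertPt v)\<bar>) ` verts G))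
     else (\<Sum>v\<in>verts G. vmeas G v * \<bar>f (VertPt v)\<bar> powr real_of_ereal q) powr (1 / real_of_ereal q))"

definition grad_norm1 :: "('v, 'e) mgraph \<Rightarrow> (('v, 'e) gpoint \<Rightarrow> real) \<Rightarrow> real" where
  "grad_norm1 G f = (\<Sum>e\<in>edges G. wt G e *
      (LBINT t:{0<..<len G e}. \<bar>deriv (\<lambda>s. f (EdgePt e s)) t\<bar>))"

definition C1Dir :: "('v, 'e) mgraph \<Rightarrow> (('v, 'e) gpoint \<Rightarrow> real) set" where
  "C1Dir G = {f. gcontinuous G f \<and>
      (\<forall>e\<in>edges G. \<exists>g. (\<forall>t\<in>{0<..<len G e}. ((\<lambda>s. f (EdgePt e s)) has_real_derivative g t) (at t))
                         \<and> uniformly_continuous_on {0<..<len G e} g) \<and>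
      (\<exists>V0 E0. finite V0 \<and> finite E0 \<and>
         (\<forall>x\<in>gpoints G. f x \<noteq> 0 \<longrightarrow> (\<exists>v\<in>V0. x = VertPt v) \<or> (\<exists>e\<in>E0. x \<in> edge_interior G e))) \<and>
      (\<forall>v\<in>bdry G. f (VertPt v) = 0)}"

definition Itilde :: "('v, 'e) mgraph \<Rightarrow> ereal \<Rightarrow> ereal" where
  "Itilde G \<nu> = (INF \<Omega>\<in>{\<Omega>. admissible G \<Omega> \<and> 0 < vmeasure G \<Omega> \<and> 0 < vmeasure G (gpoints G - \<Omega>)}.
     ereal (area G \<Omega> * min (vmeasure G \<Omega>) (vmeasure G (gpoints G - \<Omega>)) powr (inv_exp \<nu> - 1)))"

definition Itilde' :: "('v, 'e) mgraph \<Rightarrow> ereal \<Rightarrow> ereal" where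
  "Itilde' G \<nu> = (INF \<Omega>\<in>{\<Omega>. admissible G \<Omega> \<and> 0 < vmeasure G \<Omega> \<and> 0 < vmeasure G (gpoints G - \<Omega>)}.
     ereal (area G \<Omega> *
       (if \<nu> = \<infinity> then 1 / min (vmeasure G \<Omega>) (vmeasure G (gpoints G - \<Omega>))
        else (vmeasure G \<Omega> powr (1 - real_of_ereal \<nu>)
              + vmeasure G (gpoints G - \<Omega>) powr (1 - real_of_ereal \<nu>)) powr (1 / real_of_ereal \<nu>))))"

definition Stilde :: "('v, 'e) mgraph \<Rightarrow> ereal \<Rightarrow> ereal" where
  "Stilde G \<nu> = (INF f\<in>{f \<in> C1Dir G. 0 < (INF a. vnorm G (dual_exp \<nu>) (\<lambda>x. f x - a))}.
     ereal (grad_norm1 G f / (INF a. vnorm G (dual_exp \<nu>) (\<lambda>x. f x - a))))"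

definition split_fun :: "('v, 'e) mgraph \<Rightarrow> (('v, 'e) gpoint \<Rightarrow> real) \<Rightarrow> bool" where
  "split_fun G f \<longleftrightarrow> vmeasure G {x. f x > 0} \<le> vmeasure G (gpoints G) / 2 \<and>
                     vmeasure G {x. f x < 0} \<le> vmeasure G (gpoints G) / 2"

definition Stilde_split :: "('v, 'e) mgraph \<Rightarrow> ereal \<Rightarrow> ereal" where
  "Stilde_split G \<nu> = (INF f\<in>{f \<in> C1Dir G. split_fun G f \<and> 0 < vnorm G (dual_exp \<nu>) f}.
     ereal (grad_norm1 G f / vnorm G (dual_exp \<nu>) f))"

end

theory Submission
  imports Defs "HOL-Analysis.Analysis"
begin


definition Dsum :: "'e set \<Rightarrow> ('e\<Rightarrow>'v) \<Rightarrow> ('e\<Rightarrow>'v) \<Rightarrow> ('e\<Rightarrow>real) \<Rightarrow> ('v\<Rightarrow>real) \<Rightarrow> real" where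
  "Dsum E s t w \<phi> = (\<Sum>e\<in>E. w e * \<bar>\<phi> (s e) - \<phi> (t e)\<bar>)"

definition ind :: "'v set \<Rightarrow> 'v \<Rightarrow> real" where
  "ind B v = (if v \<in> B then 1 else 0)"

lemma Dsum_nonneg: "\<forall>e\<in>E. w e \<ge> 0 \<Longrightarrow> Dsum E s t w \<phi> \<ge> 0"
  unfolding Dsum_def by (intro sum_nonneg) auto

lemma Dsum_decomp:
  assumes "\<And>e. e\<in>E \<Longrightarrow> \<bar>\<phi> (s e) - \<phi> (t e)\<bar> = \<bar>\<psi> (s e) - \<psi> (t e)\<bar> + d * \<bar>\<xi> (s e) - \<xi> (t e)\<bar>"
  shows "Dsum E s t w \<phi> = Dsum E s t w \<psi> + d * Dsum E s t w \<xi>"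
  unfolding Dsum_def using assms
  by (simp add: sum_distrib_left distrib_left sum.distrib algebra_simps)

lemma layer_cake_general:
  fixes N :: "('v \<Rightarrow> real) \<Rightarrow> real" and V :: "'v set"
  assumes finV: "finite V"
   and st: "\<forall>e\<in>E. s e \<in> V \<and> t e \<in> V" and w: "\<forall>e\<in>E. w e \<ge> 0"
   and Ncong: "\<And>\<phi> \<psi>. (\<forall>v\<in>V. \<phi> v = \<psi> v) \<Longrightarrow> N \<phi> = N \<psi>"
   and Ntri: "\<And>\<phi> \<psi>. N (\<lambda>v. \<phi> v + \<psi> v) \<le> N \<phi> + N \<psi>"
   and Nhom: "\<And>c \<phi>. N (\<lambda>v. c * \<phi> v) = \<bar>c\<bar> * N \<phi>"
   and c: "c \<ge> 0"
   and hyp: "\<And>B. B \<subseteq> V \<Longrightarrow> B \<noteq> {} \<Longrightarrow> V - B \<noteq> {} \<Longrightarrow>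
              \<exists>b. c * N (\<lambda>v. ind B v - b) \<le> Dsum E s t w (ind B)"
  shows "\<exists>a. c * N (\<lambda>v. \<phi> v - a) \<le> Dsum E s t w \<phi>"
proof (induction "card (\<phi> ` V)" arbitrary: \<phi> rule: less_induct)
  case less
  show ?case
  proof (cases "card (\<phi> ` V) \<le> 1")
    case True
    obtain a where a: "\<forall>v\<in>V. \<phi> v = a"
    proof (cases "V = {}")
      case False
      then have ne0: "\<phi> ` V \<noteq> {}" by auto
      have "card (\<phi> ` V) \<noteq> 0" using finV ne0 by simp
      with True have "card (\<phi> ` V) = 1" by linarith
      then obtain y where "\<phi> ` V = {y}" by (rule card_1_singletonE)
      then show ?thesis using that by auto
    qed auto
    have "N (\<lambda>v. \<phi> v - a) = N (\<lambda>v. 0 * \<phi> v)" using a by (intro Ncong) auto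
    also have "\<dots> = 0" using Nhom[of 0 \<phi>] by simp
    finally show ?thesis using Dsum_nonneg[OF w] by (intro exI[of _ a]) simp
  next
    case False
    define y0 where "y0 = Min (\<phi> ` V)"
    have fin: "finite (\<phi> ` V)" using finV by auto
    have ne: "\<phi> ` V \<noteq> {}" using False by auto
    have y0le: "\<And>v. v \<in> V \<Longrightarrow> y0 \<le> \<phi> v" unfolding y0_def using fin by auto
    have y0in: "y0 \<in> \<phi> ` V" unfolding y0_def using fin ne by auto
    define B where "B = {v\<in>V. \<phi> v > y0}"
    have BV: "B \<subseteq> V" unfolding B_def by auto
    have Bne: "B \<noteq> {}"
    proof
      assume "B = {}"
      then have "\<phi> ` V \<subseteq> {y0}" using y0le unfolding B_def by force
      then have "card (\<phi> ` V) \<le> 1" using card_mono[of "{y0}"] by fastforce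
      with False show False by simp
    qed
    have VBne: "V - B \<noteq> {}" using y0in unfolding B_def by auto
    define y1 where "y1 = Min (\<phi> ` B)"
    have finB: "finite (\<phi> ` B)" using finV BV finite_subset by blast
    have y1le: "\<And>v. v \<in> B \<Longrightarrow> y1 \<le> \<phi> v" unfolding y1_def using finB by auto
    have y1in: "y1 \<in> \<phi> ` B" unfolding y1_def using finB Bne by auto
    have y01: "y0 < y1" using y1in unfolding B_def by auto
    have notB: "\<And>v. v \<in> V \<Longrightarrow> v \<notin> B \<Longrightarrow> \<phi> v = y0"
      using y0le unfolding B_def by force
    define \<psi> where "\<psi> = (\<lambda>v. max (\<phi> v) y1)"
    have sub: "\<psi> ` V \<subset> \<phi> ` V"
    proof -
      have "\<psi> ` V \<subseteq> \<phi> ` V - {y0}"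
      proof
        fix x assume "x \<in> \<psi> ` V"
        then obtain v where v: "v \<in> V" "x = \<psi> v" by auto
        show "x \<in> \<phi> ` V - {y0}"
        proof (cases "v \<in> B")
          case True
          then show ?thesis using v y1le[OF True] y01 unfolding \<psi>_def by auto
        next
          case False
          then show ?thesis using v notB[OF v(1) False] y01 y1in BV unfolding \<psi>_def by auto
        qed
      qed
      then show ?thesis using y0in by blast
    qed
    have "card (\<psi> ` V) < card (\<phi> ` V)" by (rule psubset_card_mono[OF fin sub])
    from less(1)[OF this] obtain a1 where a1: "c * N (\<lambda>v. \<psi> v - a1) \<le> Dsum E s t w \<psi>" by blast
    from hyp[OF BV Bne VBne] obtain b where b: "c * N (\<lambda>v. ind B v - b) \<le> Dsum E s t w (ind B)" by blast
    define d where "d = y1 - y0"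
    have d: "d > 0" using y01 unfolding d_def by simp
    have phi_eq: "\<forall>v\<in>V. \<phi> v = \<psi> v - d + d * ind B v"
    proof
      fix v assume v: "v \<in> V"
      show "\<phi> v = \<psi> v - d + d * ind B v"
      proof (cases "v \<in> B")
        case True then show ?thesis using y1le[OF True] unfolding \<psi>_def d_def ind_def by auto
      next
        case False then show ?thesis using notB[OF v False] y01 unfolding \<psi>_def d_def ind_def by auto
      qed
    qed
    define a where "a = a1 - d + d * b"
    have "N (\<lambda>v. \<phi> v - a) = N (\<lambda>v. (\<psi> v - a1) + d * (ind B v - b))"
      using phi_eq unfolding a_def by (intro Ncong) (auto simp: algebra_simps)
    also have "\<dots> \<le> N (\<lambda>v. \<psi> v - a1) + N (\<lambda>v. d * (ind B v - b))" by (rule Ntri)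
    also have "\<dots> = N (\<lambda>v. \<psi> v - a1) + d * N (\<lambda>v. ind B v - b)"
      using Nhom[of d "\<lambda>v. ind B v - b"] d by simp
    finally have h: "N (\<lambda>v. \<phi> v - a) \<le> N (\<lambda>v. \<psi> v - a1) + d * N (\<lambda>v. ind B v - b)" .
    have "c * N (\<lambda>v. \<phi> v - a) \<le> c * N (\<lambda>v. \<psi> v - a1) + d * (c * N (\<lambda>v. ind B v - b))"
      using mult_left_mono[OF h c] by (simp add: algebra_simps)
    also have "\<dots> \<le> Dsum E s t w \<psi> + d * Dsum E s t w (ind B)"
      using a1 b d by (meson add_mono mult_left_mono less_imp_le)
    also have "\<dots> = Dsum E s t w \<phi>"
    proof (rule sym, rule Dsum_decomp)
      fix e assume e: "e \<in> E"
      have u: "s e \<in> V" and x: "t e \<in> V" using st e by auto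
      show "\<bar>\<phi> (s e) - \<phi> (t e)\<bar> = \<bar>\<psi> (s e) - \<psi> (t e)\<bar> + d * \<bar>ind B (s e) - ind B (t e)\<bar>"
        using phi_eq u x y1le notB[OF u] notB[OF x] d y01 unfolding ind_def \<psi>_def d_def
        by (cases "s e \<in> B"; cases "t e \<in> B") (auto simp: abs_if max_def)
    qed
    finally show ?thesis by blast
  qed
qed

lemma layer_cake_pos:
  fixes N :: "('v \<Rightarrow> real) \<Rightarrow> real" and V :: "'v set"
  assumes finV: "finite V"
   and st: "\<forall>e\<in>E. s e \<in> V \<and> t e \<in> V" and w: "\<forall>e\<in>E. w e \<ge> 0"
   and Ncong: "\<And>\<phi> \<psi>. (\<forall>v\<in>V. \<phi> v = \<psi> v) \<Longrightarrow> N \<phi> = N \<psi>"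
   and Ntri: "\<And>\<phi> \<psi>. N (\<lambda>v. \<phi> v + \<psi> v) \<le> N \<phi> + N \<psi>"
   and Nhom: "\<And>c \<phi>. N (\<lambda>v. c * \<phi> v) = \<bar>c\<bar> * N \<phi>"
   and c: "c \<ge> 0"
   and Pmono: "\<And>B B'. B' \<subseteq> B \<Longrightarrow> P B \<Longrightarrow> P B'"
   and hyp: "\<And>B. B \<subseteq> V \<Longrightarrow> B \<noteq> {} \<Longrightarrow> P B \<Longrightarrow> c * N (ind B) \<le> Dsum E s t w (ind B)"
  shows "(\<forall>v\<in>V. \<phi> v \<ge> 0) \<Longrightarrow> P {v\<in>V. \<phi> v > 0} \<Longrightarrow> c * N \<phi> \<le> Dsum E s t w \<phi>"
proof (induction "card {v\<in>V. \<phi> v > 0}" arbitrary: \<phi> rule: less_induct)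
  case less
  define B where "B = {v\<in>V. \<phi> v > 0}"
  show ?case
  proof (cases "B = {}")
    case True
    have "N \<phi> = N (\<lambda>v. 0 * \<phi> v)" using True less.prems unfolding B_def
      by (intro Ncong) force
    also have "\<dots> = 0" using Nhom[of 0 \<phi>] by simp
    finally show ?thesis using Dsum_nonneg[OF w] by simp
  next
    case False
    have BV: "B \<subseteq> V" unfolding B_def by auto
    have finB: "finite B" using finV BV finite_subset by blast
    define y where "y = Min (\<phi> ` B)"
    have yle: "\<And>v. v \<in> B \<Longrightarrow> y \<le> \<phi> v" unfolding y_def using finB by auto
    have yin: "y \<in> \<phi> ` B" unfolding y_def using finB False by auto
    have ypos: "y > 0" using yin unfolding B_def by auto
    define \<psi> where "\<psi> = (\<lambda>v. \<phi> v - y * ind B v)"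
    have psi_nn: "\<forall>v\<in>V. \<psi> v \<ge> 0" using yle less.prems(1) unfolding \<psi>_def ind_def by auto
    have sub: "{v\<in>V. \<psi> v > 0} \<subset> B"
    proof -
      have "{v\<in>V. \<psi> v > 0} \<subseteq> B" using less.prems(1) unfolding \<psi>_def ind_def B_def by auto
      moreover obtain v0 where "v0 \<in> B" "\<phi> v0 = y" using yin by auto
      moreover have "\<psi> v0 = 0" using calculation unfolding \<psi>_def ind_def by auto
      ultimately show ?thesis by force
    qed
    have "card {v\<in>V. \<psi> v > 0} < card {v\<in>V. \<phi> v > 0}"
      using psubset_card_mono[OF finB sub] unfolding B_def by simp
    moreover have "P {v\<in>V. \<psi> v > 0}" using Pmono[of _ B] sub less.prems(2) unfolding B_def by blast
    ultimately have IH: "c * N \<psi> \<le> Dsum E s t w \<psi>" using less(1) psi_nn by blast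
    have hB: "c * N (ind B) \<le> Dsum E s t w (ind B)"
      using hyp[OF BV False] less.prems(2) unfolding B_def by simp
    have "N \<phi> = N (\<lambda>v. \<psi> v + y * ind B v)" unfolding \<psi>_def by (intro Ncong) auto
    also have "\<dots> \<le> N \<psi> + N (\<lambda>v. y * ind B v)" by (rule Ntri)
    also have "\<dots> = N \<psi> + y * N (ind B)" using Nhom[of y "ind B"] ypos by simp
    finally have h: "N \<phi> \<le> N \<psi> + y * N (ind B)" .
    have "c * N \<phi> \<le> c * N \<psi> + y * (c * N (ind B))"
      using mult_left_mono[OF h c] by (simp add: algebra_simps)
    also have "\<dots> \<le> Dsum E s t w \<psi> + y * Dsum E s t w (ind B)"
      using IH hB ypos by (meson add_mono mult_left_mono less_imp_le)
    also have "\<dots> = Dsum E s t w \<phi>"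
    proof (rule sym, rule Dsum_decomp)
      fix e assume e: "e \<in> E"
      have u: "s e \<in> V" and x: "t e \<in> V" using st e by auto
      show "\<bar>\<phi> (s e) - \<phi> (t e)\<bar> = \<bar>\<psi> (s e) - \<psi> (t e)\<bar> + y * \<bar>ind B (s e) - ind B (t e)\<bar>"
        using u x yle[of "s e"] yle[of "t e"] less.prems(1) ypos unfolding ind_def \<psi>_def B_def
        by (cases "s e \<in> B"; cases "t e \<in> B") (auto simp: abs_if B_def)
    qed
    finally show ?thesis .
  qed
qed

lemma layer_cake_split:
  fixes N :: "('v \<Rightarrow> real) \<Rightarrow> real" and V :: "'v set"
  assumes finV: "finite V"
   and st: "\<forall>e\<in>E. s e \<in> V \<and> t e \<in> V" and w: "\<forall>e\<in>E. w e \<ge> 0"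
   and Ncong: "\<And>\<phi> \<psi>. (\<forall>v\<in>V. \<phi> v = \<psi> v) \<Longrightarrow> N \<phi> = N \<psi>"
   and Ntri: "\<And>\<phi> \<psi>. N (\<lambda>v. \<phi> v + \<psi> v) \<le> N \<phi> + N \<psi>"
   and Nhom: "\<And>c \<phi>. N (\<lambda>v. c * \<phi> v) = \<bar>c\<bar> * N \<phi>"
   and c: "c \<ge> 0"
   and Pmono: "\<And>B B'. B' \<subseteq> B \<Longrightarrow> P B \<Longrightarrow> P B'"
   and hyp: "\<And>B. B \<subseteq> V \<Longrightarrow> B \<noteq> {} \<Longrightarrow> P B \<Longrightarrow> c * N (ind B) \<le> Dsum E s t w (ind B)"
   and P1: "P {v\<in>V. \<phi> v > 0}" and P2: "P {v\<in>V. \<phi> v < 0}"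
  shows "c * N \<phi> \<le> Dsum E s t w \<phi>"
proof -
  define p where "p = (\<lambda>v. max (\<phi> v) 0)"
  define n where "n = (\<lambda>v. max (- \<phi> v) 0)"
  have "{v\<in>V. p v > 0} = {v\<in>V. \<phi> v > 0}" unfolding p_def by auto
  then have hp: "c * N p \<le> Dsum E s t w p"
    using layer_cake_pos[OF finV st w Ncong Ntri Nhom c Pmono hyp, where \<phi>=p] P1 unfolding p_def by auto
  have "{v\<in>V. n v > 0} = {v\<in>V. \<phi> v < 0}" unfolding n_def by auto
  then have hn: "c * N n \<le> Dsum E s t w n"
    using layer_cake_pos[OF finV st w Ncong Ntri Nhom c Pmono hyp, where \<phi>=n] P2 unfolding n_def by auto
  have "N \<phi> = N (\<lambda>v. p v + (-1) * n v)" unfolding p_def n_def by (intro Ncong) auto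
  also have "\<dots> \<le> N p + N (\<lambda>v. (-1) * n v)" by (rule Ntri)
  also have "\<dots> = N p + N n" using Nhom[of "-1" n] by simp
  finally have h: "N \<phi> \<le> N p + N n" .
  have "c * N \<phi> \<le> c * N p + c * N n"
    using mult_left_mono[OF h c] by (simp add: algebra_simps)
  also have "\<dots> \<le> Dsum E s t w p + Dsum E s t w n" using hp hn by simp
  also have "\<dots> = Dsum E s t w \<phi>"
  proof -
    have "Dsum E s t w \<phi> = Dsum E s t w p + 1 * Dsum E s t w n"
    proof (rule Dsum_decomp)
      fix e show "\<bar>\<phi> (s e) - \<phi> (t e)\<bar> = \<bar>p (s e) - p (t e)\<bar> + 1 * \<bar>n (s e) - n (t e)\<bar>"
        unfolding p_def n_def by (auto simp: abs_if max_def)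
    qed
    then show ?thesis by simp
  qed
  finally show ?thesis .
qed



definition nrm :: "'v set \<Rightarrow> ('v \<Rightarrow> real) \<Rightarrow> ereal \<Rightarrow> ('v \<Rightarrow> real) \<Rightarrow> real" where
  "nrm V m q \<phi> = (if q = \<infinity> then Max (insert 0 ((\<lambda>v. \<bar>\<phi> v\<bar>) ` V))
     else (\<Sum>v\<in>V. m v * \<bar>\<phi> v\<bar> powr real_of_ereal q) powr (1 / real_of_ereal q))"

lemma vnorm_nrm: "vnorm G q f = nrm (verts G) (vmeas G) q (\<lambda>v. f (VertPt v))"
  by (simp add: vnorm_def nrm_def)

lemma nrm_cong: "(\<forall>v\<in>V. \<phi> v = \<psi> v) \<Longrightarrow> nrm V m q \<phi> = nrm V m q \<psi>"
proof -
  assume h: "\<forall>v\<in>V. \<phi> v = \<psi> v"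
  have "(\<lambda>v. \<bar>\<phi> v\<bar>) ` V = (\<lambda>v. \<bar>\<psi> v\<bar>) ` V" using h by (intro image_cong) auto
  moreover have "(\<Sum>v\<in>V. m v * \<bar>\<phi> v\<bar> powr real_of_ereal q) = (\<Sum>v\<in>V. m v * \<bar>\<psi> v\<bar> powr real_of_ereal q)"
    using h by (intro sum.cong) auto
  ultimately show ?thesis unfolding nrm_def by simp
qed

lemma Max_ins0_le: "finite V \<Longrightarrow> 0 \<le> K \<Longrightarrow> (\<And>v. v \<in> V \<Longrightarrow> g v \<le> K) \<Longrightarrow> Max (insert 0 (g ` V)) \<le> (K::real)"
  by (subst Max_le_iff) auto

lemma Max_ins0_ge: "finite V \<Longrightarrow> v \<in> V \<Longrightarrow> g v \<le> Max (insert 0 (g ` V))"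
  by (rule Max_ge) auto

lemma Max_ins0_nn: "finite V \<Longrightarrow> (0::real) \<le> Max (insert 0 (g ` V))"
  by (rule Max_ge) auto

definition goodq :: "ereal \<Rightarrow> bool" where
  "goodq q \<longleftrightarrow> q = \<infinity> \<or> (\<exists>r. q = ereal r \<and> r \<ge> 1)"

lemma conv_powr:
  fixes x y l r :: real
  assumes "0 \<le> x" "0 \<le> y" "0 \<le> l" "l \<le> 1" "1 \<le> r"
  shows "(l*x + (1-l)*y) powr r \<le> l * x powr r + (1-l) * y powr r"
proof (cases "x = 0 \<or> y = 0")
  case True
  have aux: "\<And>z t. 0 \<le> z \<Longrightarrow> 0 \<le> t \<Longrightarrow> t \<le> 1 \<Longrightarrow> (t*z) powr r \<le> t * z powr r"
  proof -
    fix z t :: real assume "0 \<le> z" "0 \<le> t" "t \<le> 1"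
    have "(t*z) powr r = t powr r * z powr r" using \<open>0 \<le> z\<close> \<open>0 \<le> t\<close> by (simp add: powr_mult)
    also have "\<dots> \<le> t * z powr r"
    proof (cases "t = 0")
      case False
      then have "t powr r \<le> t" using powr_le_one_le[of t r] \<open>0 \<le> t\<close> \<open>t \<le> 1\<close> assms(5) by simp
      then show ?thesis by (simp add: mult_right_mono)
    qed (simp)
    finally show "(t*z) powr r \<le> t * z powr r" .
  qed
  from True show ?thesis
  proof
    assume "x = 0" then show ?thesis using aux[of y "1-l"] assms by simp
  next
    assume "y = 0" then show ?thesis using aux[of x l] assms by simp
  qed
next
  case False
  then have "x > 0" "y > 0" using assms by auto
  then show ?thesis using convex_onD[OF powr_convex[OF assms(5)], of "1-l" x y] assms
    by (simp add: algebra_simps)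
qed

lemma nrm_nonneg: "finite V \<Longrightarrow> nrm V m q \<phi> \<ge> 0"
  unfolding nrm_def using Max_ins0_nn by auto

lemma nrm_hom:
  assumes finV: "finite V" and mpos: "\<forall>v\<in>V. m v > 0" and q: "goodq q"
  shows "nrm V m q (\<lambda>v. c * \<phi> v) = \<bar>c\<bar> * nrm V m q \<phi>"
proof (cases "q = \<infinity>")
  case True
  let ?M = "Max (insert 0 ((\<lambda>v. \<bar>\<phi> v\<bar>) ` V))"
  let ?Mc = "Max (insert 0 ((\<lambda>v. \<bar>c * \<phi> v\<bar>) ` V))"
  have le1: "?Mc \<le> \<bar>c\<bar> * ?M"
    using finV by (intro Max_ins0_le) (auto simp: abs_mult intro!: mult_left_mono Max_ins0_ge Max_ins0_nn)
  have le2: "\<bar>c\<bar> * ?M \<le> ?Mc"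
  proof (cases "c = 0")
    case True then show ?thesis using Max_ins0_nn[OF finV] by simp
  next
    case False
    have "?M \<le> ?Mc / \<bar>c\<bar>"
      using finV False
      by (intro Max_ins0_le) (auto simp: abs_mult field_simps intro!: Max_ins0_nn Max_ins0_ge[where g="\<lambda>v. \<bar>c * \<phi> v\<bar>", simplified abs_mult])
    then show ?thesis using False by (simp add: field_simps)
  qed
  show ?thesis using True le1 le2 unfolding nrm_def by simp
next
  case False
  then obtain r where r: "q = ereal r" "r \<ge> 1" using q unfolding goodq_def by auto
  have "(\<Sum>v\<in>V. m v * \<bar>c * \<phi> v\<bar> powr r) = \<bar>c\<bar> powr r * (\<Sum>v\<in>V. m v * \<bar>\<phi> v\<bar> powr r)"
    by (simp add: abs_mult powr_mult sum_distrib_left algebra_simps)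
  moreover have "(\<bar>c\<bar> powr r * (\<Sum>v\<in>V. m v * \<bar>\<phi> v\<bar> powr r)) powr (1/r) = \<bar>c\<bar> * (\<Sum>v\<in>V. m v * \<bar>\<phi> v\<bar> powr r) powr (1/r)"
    using r by (simp add: powr_mult powr_powr)
  ultimately show ?thesis unfolding nrm_def using r by simp
qed

lemma nrm_zero: "finite V \<Longrightarrow> \<forall>v\<in>V. m v > 0 \<Longrightarrow> goodq q \<Longrightarrow> \<forall>v\<in>V. \<phi> v = 0 \<Longrightarrow> nrm V m q \<phi> = 0"
  using nrm_hom[of V m q 0 \<phi>] nrm_cong[of V \<phi> "\<lambda>v. 0 * \<phi> v"] by simp

lemma nrm_eq0:
  assumes finV: "finite V" and mpos: "\<forall>v\<in>V. m v > 0" and q: "goodq q" and z: "nrm V m q \<phi> = 0"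
  shows "\<forall>v\<in>V. \<phi> v = 0"
proof
  fix v assume v: "v \<in> V"
  show "\<phi> v = 0"
  proof (cases "q = \<infinity>")
    case True
    then show ?thesis using z Max_ins0_ge[OF finV v, of "\<lambda>v. \<bar>\<phi> v\<bar>"] unfolding nrm_def by simp
  next
    case False
    then obtain r where r: "q = ereal r" "r \<ge> 1" using q unfolding goodq_def by auto
    have "(\<Sum>v\<in>V. m v * \<bar>\<phi> v\<bar> powr r) = 0" using z r unfolding nrm_def by simp
    then have "\<forall>v\<in>V. m v * \<bar>\<phi> v\<bar> powr r = 0"
      using finV mpos by (subst (asm) sum_nonneg_eq_0_iff) (auto intro: less_imp_le)
    then have "m v * \<bar>\<phi> v\<bar> powr r = 0" using v by blast
    moreover have "m v \<noteq> 0" using mpos v by auto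
    ultimately show ?thesis by simp
  qed
qed

lemma nrm_tri:
  assumes finV: "finite V" and mpos: "\<forall>v\<in>V. m v > 0" and q: "goodq q"
  shows "nrm V m q (\<lambda>v. \<phi> v + \<psi> v) \<le> nrm V m q \<phi> + nrm V m q \<psi>"
proof (cases "q = \<infinity>")
  case True
  have "Max (insert 0 ((\<lambda>v. \<bar>\<phi> v + \<psi> v\<bar>) ` V)) \<le> Max (insert 0 ((\<lambda>v. \<bar>\<phi> v\<bar>) ` V)) + Max (insert 0 ((\<lambda>v. \<bar>\<psi> v\<bar>) ` V))"
  proof (rule Max_ins0_le[OF finV])
    show "0 \<le> Max (insert 0 ((\<lambda>v. \<bar>\<phi> v\<bar>) ` V)) + Max (insert 0 ((\<lambda>v. \<bar>\<psi> v\<bar>) ` V))"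
      using Max_ins0_nn[OF finV] by (simp add: add_nonneg_nonneg)
    fix v assume v: "v \<in> V"
    have "\<bar>\<phi> v + \<psi> v\<bar> \<le> \<bar>\<phi> v\<bar> + \<bar>\<psi> v\<bar>" by (rule abs_triangle_ineq)
    also have "\<dots> \<le> Max (insert 0 ((\<lambda>v. \<bar>\<phi> v\<bar>) ` V)) + Max (insert 0 ((\<lambda>v. \<bar>\<psi> v\<bar>) ` V))"
      by (intro add_mono Max_ins0_ge[OF finV v])
    finally show "\<bar>\<phi> v + \<psi> v\<bar> \<le> Max (insert 0 ((\<lambda>v. \<bar>\<phi> v\<bar>) ` V)) + Max (insert 0 ((\<lambda>v. \<bar>\<psi> v\<bar>) ` V))" .
  qed
  then show ?thesis using True unfolding nrm_def by simp
next
  case False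
  then obtain r where r: "q = ereal r" "r \<ge> 1" using q unfolding goodq_def by auto
  define A where "A = nrm V m q \<phi>"
  define B where "B = nrm V m q \<psi>"
  show ?thesis
  proof (cases "A = 0 \<or> B = 0")
    case True
    then show ?thesis
    proof
      assume "A = 0"
      then have "\<forall>v\<in>V. \<phi> v = 0" using nrm_eq0[OF finV mpos q] unfolding A_def by blast
      then have "nrm V m q (\<lambda>v. \<phi> v + \<psi> v) = nrm V m q \<psi>" by (intro nrm_cong) auto
      then show ?thesis using \<open>A = 0\<close> unfolding A_def by simp
    next
      assume "B = 0"
      then have "\<forall>v\<in>V. \<psi> v = 0" using nrm_eq0[OF finV mpos q] unfolding B_def by blast
      then have "nrm V m q (\<lambda>v. \<phi> v + \<psi> v) = nrm V m q \<phi>" by (intro nrm_cong) auto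
      then show ?thesis using \<open>B = 0\<close> unfolding B_def by simp
    qed
  next
    case False
    have A: "A > 0" and B: "B > 0" using False nrm_nonneg[OF finV] unfolding A_def B_def
      by (auto simp: order_le_less)
    define S where "S = (\<lambda>\<phi>. \<Sum>v\<in>V. m v * \<bar>\<phi> v\<bar> powr r)"
    have Snn: "\<And>\<phi>. S \<phi> \<ge> 0" unfolding S_def using mpos by (intro sum_nonneg mult_nonneg_nonneg) (auto simp: less_imp_le)
    have nrmS: "\<And>\<phi>. nrm V m q \<phi> = S \<phi> powr (1/r)" unfolding nrm_def S_def using r by simp
    have SA: "S \<phi> = A powr r" unfolding A_def nrmS using Snn[of \<phi>] r by (simp add: powr_powr)
    have SB: "S \<psi> = B powr r" unfolding B_def nrmS using Snn[of \<psi>] r by (simp add: powr_powr)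
    define l where "l = A / (A + B)"
    have l: "0 \<le> l" "l \<le> 1" using A B unfolding l_def by auto
    have l1: "1 - l = B / (A + B)" using A B unfolding l_def by (simp add: field_simps)
    have pt: "\<And>v. (\<bar>\<phi> v + \<psi> v\<bar> / (A+B)) powr r \<le> l * (\<bar>\<phi> v\<bar> / A) powr r + (1-l) * (\<bar>\<psi> v\<bar> / B) powr r"
    proof -
      fix v
      have "\<bar>\<phi> v + \<psi> v\<bar> / (A+B) \<le> (\<bar>\<phi> v\<bar> + \<bar>\<psi> v\<bar>) / (A+B)"
        using A B by (intro divide_right_mono) auto
      also have "\<dots> = l * (\<bar>\<phi> v\<bar> / A) + (1-l) * (\<bar>\<psi> v\<bar> / B)"
      proof -
        have "l * (\<bar>\<phi> v\<bar> / A) = \<bar>\<phi> v\<bar> / (A+B)" unfolding l_def using A by simp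
        moreover have "(1-l) * (\<bar>\<psi> v\<bar> / B) = \<bar>\<psi> v\<bar> / (A+B)" unfolding l1 using B by simp
        ultimately show ?thesis by (simp add: add_divide_distrib)
      qed
      finally have "(\<bar>\<phi> v + \<psi> v\<bar> / (A+B)) powr r \<le> (l * (\<bar>\<phi> v\<bar> / A) + (1-l) * (\<bar>\<psi> v\<bar> / B)) powr r"
        using r A B by (intro powr_mono2) auto
      also have "\<dots> \<le> l * (\<bar>\<phi> v\<bar> / A) powr r + (1-l) * (\<bar>\<psi> v\<bar> / B) powr r"
        using l r A B by (intro conv_powr) auto
      finally show "?thesis v" .
    qed
    have "S (\<lambda>v. \<phi> v + \<psi> v) / (A+B) powr r = (\<Sum>v\<in>V. m v * (\<bar>\<phi> v + \<psi> v\<bar> / (A+B)) powr r)"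
      unfolding S_def using A B by (simp add: powr_divide sum_divide_distrib)
    also have "\<dots> \<le> (\<Sum>v\<in>V. m v * (l * (\<bar>\<phi> v\<bar> / A) powr r + (1-l) * (\<bar>\<psi> v\<bar> / B) powr r))"
      using mpos pt by (intro sum_mono mult_left_mono) (auto intro: less_imp_le)
    also have "\<dots> = l * (S \<phi> / A powr r) + (1-l) * (S \<psi> / B powr r)"
      unfolding S_def using A B
      by (simp add: powr_divide sum_divide_distrib sum_distrib_left sum.distrib algebra_simps)
    also have "\<dots> = 1" using A B unfolding SA SB by simp
    finally have "S (\<lambda>v. \<phi> v + \<psi> v) \<le> (A+B) powr r" using A B by (simp add: divide_le_eq)
    then have "S (\<lambda>v. \<phi> v + \<psi> v) powr (1/r) \<le> ((A+B) powr r) powr (1/r)"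
      using r Snn by (intro powr_mono2) auto
    also have "\<dots> = A + B" using r A B by (simp add: powr_powr)
    finally show ?thesis unfolding nrmS A_def B_def .
  qed
qed



lemma scalar_conv:
  fixes X Y al r :: real
  assumes "0 < al" "al < 1" "0 \<le> X" "0 \<le> Y" "1 \<le> r"
  shows "(X + Y) powr r \<le> al powr (1-r) * X powr r + (1-al) powr (1-r) * Y powr r"
proof -
  have "(X + Y) powr r = (al * (X/al) + (1-al) * (Y/(1-al))) powr r" using assms by simp
  also have "\<dots> \<le> al * (X/al) powr r + (1-al) * (Y/(1-al)) powr r"
    using assms by (intro conv_powr) auto
  also have "al * (X/al) powr r = al powr (1-r) * X powr r"
    using assms by (simp add: powr_divide powr_diff)
  also have "(1-al) * (Y/(1-al)) powr r = (1-al) powr (1-r) * Y powr r"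
    using assms by (simp add: powr_divide powr_diff)
  finally show ?thesis .
qed

lemma scalar_p:
  fixes x y p :: real
  assumes x: "x > 0" and y: "y > 0" and p: "p > 1"
  defines "r \<equiv> p / (p - 1)"
  defines "T \<equiv> (\<lambda>a. (x * \<bar>1-a\<bar> powr r + y * \<bar>a\<bar> powr r) powr (1/r))"
  defines "F \<equiv> (x powr (1-p) + y powr (1-p)) powr (1/p)"
  shows "\<forall>a. T a * F \<ge> 1" and "\<exists>a. T a * F \<le> 1"
proof -
  have r1: "r > 1" unfolding r_def using p by (simp add: field_simps)
  have rm1: "r - 1 = 1 / (p - 1)" unfolding r_def using p by (simp add: field_simps)
  have pr: "(p - 1) * (r - 1) = 1" unfolding rm1 using p by simp
  have rr: "(r - 1) / r = 1 / p" unfolding rm1 r_def using p by (simp add: field_simps)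
  define u where "u = x powr (p-1)"
  define w where "w = y powr (p-1)"
  have u: "u > 0" and w: "w > 0" unfolding u_def w_def using x y by auto
  have xu: "x = u powr (r-1)" unfolding u_def using x pr by (simp add: powr_powr)
  have yw: "y = w powr (r-1)" unfolding w_def using y pr by (simp add: powr_powr)
  have xi: "x powr (1-p) = 1 / u" unfolding u_def
    using powr_minus_divide[of x "p-1"] by simp
  have yi: "y powr (1-p) = 1 / w" unfolding w_def
    using powr_minus_divide[of y "p-1"] by simp
  define al where "al = w / (u + w)"
  have al: "0 < al" "al < 1" unfolding al_def using u w by auto
  have al1: "1 - al = u / (u + w)" unfolding al_def using u w by (simp add: field_simps)
  define c where "c = (u * w / (u + w)) powr (r - 1)"
  have c: "c > 0" unfolding c_def using u w by simp
  have neg: "\<And>z::real. z > 0 \<Longrightarrow> z powr (1 - r) = 1 / z powr (r - 1)"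
    using powr_minus_divide by (metis minus_diff_eq)
  have xc: "x = c * al powr (1-r)"
  proof -
    have "c * al powr (1-r) = (u * w / (u + w)) powr (r - 1) / (w / (u + w)) powr (r - 1)"
      unfolding c_def using neg[OF al(1)] by (simp add: al_def)
    also have "\<dots> = ((u * w / (u + w)) / (w / (u + w))) powr (r - 1)" by (simp add: powr_divide)
    also have "(u * w / (u + w)) / (w / (u + w)) = u" using u w
      by (simp add: divide_divide_eq_left')
    finally show ?thesis using xu by simp
  qed
  have yc: "y = c * (1-al) powr (1-r)"
  proof -
    have "c * (1-al) powr (1-r) = (u * w / (u + w)) powr (r - 1) / (u / (u + w)) powr (r - 1)"
    proof -
      have "0 < u / (u + w)" using u w by simp
      then show ?thesis unfolding c_def al1 using neg[of "u / (u + w)"] by simp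
    qed
    also have "\<dots> = ((u * w / (u + w)) / (u / (u + w))) powr (r - 1)" by (simp add: powr_divide)
    also have "(u * w / (u + w)) / (u / (u + w)) = w" using u w
      by (simp add: divide_divide_eq_left')
    finally show ?thesis using yw by simp
  qed
  have Tc: "\<And>a. T a = (c * (al powr (1-r) * \<bar>1-a\<bar> powr r + (1-al) powr (1-r) * \<bar>a\<bar> powr r)) powr (1/r)"
    unfolding T_def by (subst xc, subst yc) (simp add: algebra_simps)
  have cF: "c powr (1/r) * F = 1"
  proof -
    have "c powr (1/r) = (u * w / (u + w)) powr (1/p)" unfolding c_def
      using rr by (simp add: powr_powr)
    moreover have "F = ((u + w) / (u * w)) powr (1/p)" unfolding F_def xi yi
      using u w by (simp add: field_simps)
    ultimately have "c powr (1/r) * F = (u * w / (u + w) * ((u + w) / (u * w))) powr (1/p)"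
      by (simp only: powr_mult)
    also have "u * w / (u + w) * ((u + w) / (u * w)) = 1" using u w by simp
    finally show ?thesis by simp
  qed
  have F: "F > 0" unfolding F_def using x y
    by (metis add_pos_pos powr_gt_zero order_less_irrefl)
  show "\<forall>a. T a * F \<ge> 1"
  proof
    fix a
    have "1 \<le> (\<bar>1-a\<bar> + \<bar>a\<bar>) powr r" using r1 by (intro ge_one_powr_ge_zero) auto
    also have "\<dots> \<le> al powr (1-r) * \<bar>1-a\<bar> powr r + (1-al) powr (1-r) * \<bar>a\<bar> powr r"
      using al r1 by (intro scalar_conv) auto
    finally have h: "c \<le> c * (al powr (1-r) * \<bar>1-a\<bar> powr r + (1-al) powr (1-r) * \<bar>a\<bar> powr r)"
      using c by simp
    have "c powr (1/r) \<le> T a" unfolding Tc using h c r1 by (intro powr_mono2) auto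
    then have "c powr (1/r) * F \<le> T a * F" using F by simp
    then show "T a * F \<ge> 1" using cF by simp
  qed
  show "\<exists>a. T a * F \<le> 1"
  proof (intro exI)
    have "al powr (1-r) * \<bar>1-(1-al)\<bar> powr r + (1-al) powr (1-r) * \<bar>1-al\<bar> powr r = al + (1 - al)"
      using al by (simp add: powr_add[symmetric])
    then have "T (1-al) = c powr (1/r)" unfolding Tc by simp
    then show "T (1-al) * F \<le> 1" using cF by simp
  qed
qed



definition Fp :: "ereal \<Rightarrow> real \<Rightarrow> real \<Rightarrow> real" where
  "Fp \<nu> x y = (if \<nu> = \<infinity> then 1 / min x y
     else (x powr (1 - real_of_ereal \<nu>) + y powr (1 - real_of_ereal \<nu>)) powr (1 / real_of_ereal \<nu>))"

definition rinv :: "ereal \<Rightarrow> real" where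
  "rinv q = (if q = \<infinity> then 0 else 1 / real_of_ereal q)"

lemma nu_cases:
  assumes "1 \<le> \<nu>"
  obtains "\<nu> = \<infinity>" | "\<nu> = 1" | p where "\<nu> = ereal p" "p > 1"
proof -
  consider "\<nu> = \<infinity>" | p where "\<nu> = ereal p"
    using assms by (cases \<nu>) auto
  then show ?thesis
  proof cases
    case 1 then show ?thesis using that by blast
  next
    case 2
    then have "p \<ge> 1" using assms by simp
    then show ?thesis using that 2 by (cases "p = 1") (auto simp: one_ereal_def)
  qed
qed

lemma dual_good: "1 \<le> \<nu> \<Longrightarrow> goodq (dual_exp \<nu>)"
proof (erule nu_cases)
  fix p assume "\<nu> = ereal p" "p > 1"
  then show "goodq (dual_exp \<nu>)" unfolding goodq_def dual_exp_def
    by (auto simp: one_ereal_def intro!: exI[of _ "p/(p-1)"])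
qed (auto simp: goodq_def dual_exp_def)

lemma rinv_dual: "1 \<le> \<nu> \<Longrightarrow> inv_exp \<nu> - 1 = - rinv (dual_exp \<nu>)"
proof (erule nu_cases)
  fix p assume "\<nu> = ereal p" "p > 1"
  then show "inv_exp \<nu> - 1 = - rinv (dual_exp \<nu>)" unfolding rinv_def dual_exp_def inv_exp_def
    by (auto simp: one_ereal_def field_simps)
qed (auto simp: rinv_def dual_exp_def inv_exp_def)

lemma sum_split_B:
  assumes "finite V" "B \<subseteq> V"
  shows "(\<Sum>v\<in>V. g v) = (\<Sum>v\<in>B. g v) + (\<Sum>v\<in>V-B. g v)"
  using sum.subset_diff[OF assms(2) assms(1), of g] by (simp add: add.commute)

lemma nrm_ind:
  assumes finV: "finite V" and BV: "B \<subseteq> V" and Bne: "B \<noteq> {}" and q: "goodq q"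
    and mpos: "\<forall>v\<in>V. m v > 0"
  shows "nrm V m q (ind B) = sum m B powr rinv q"
proof -
  have mB: "sum m B > 0" using finV BV Bne mpos by (intro sum_pos) (auto intro: finite_subset)
  show ?thesis
  proof (cases "q = \<infinity>")
    case True
    obtain v0 where v0: "v0 \<in> B" using Bne by auto
    have "Max (insert 0 ((\<lambda>v. \<bar>ind B v\<bar>) ` V)) \<le> 1"
      using finV by (intro Max_ins0_le) (auto simp: ind_def)
    moreover have "1 \<le> Max (insert 0 ((\<lambda>v. \<bar>ind B v\<bar>) ` V))"
      using Max_ins0_ge[OF finV, of v0 "\<lambda>v. \<bar>ind B v\<bar>"] v0 BV by (auto simp: ind_def)
    ultimately show ?thesis using True mB unfolding nrm_def rinv_def by simp
  next
    case False
    then obtain r where r: "q = ereal r" "r \<ge> 1" using q unfolding goodq_def by auto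
    have "(\<Sum>v\<in>V. m v * \<bar>ind B v\<bar> powr r) = (\<Sum>v\<in>B. m v * \<bar>ind B v\<bar> powr r) + (\<Sum>v\<in>V-B. m v * \<bar>ind B v\<bar> powr r)"
      by (rule sum_split_B[OF finV BV])
    also have "\<dots> = sum m B" using r by (simp add: ind_def)
    finally show ?thesis using r unfolding nrm_def rinv_def by simp
  qed
qed

lemma nrm_ind_shift_inf:
  assumes finV: "finite V" and BV: "B \<subseteq> V" and Bne: "B \<noteq> {}" and VB: "V - B \<noteq> {}"
  shows "nrm V m \<infinity> (\<lambda>v. ind B v - a) = max \<bar>1-a\<bar> \<bar>a\<bar>"
proof -
  obtain v0 where v0: "v0 \<in> B" using Bne by auto
  obtain v1 where v1: "v1 \<in> V" "v1 \<notin> B" using VB by auto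
  have "Max (insert 0 ((\<lambda>v. \<bar>ind B v - a\<bar>) ` V)) \<le> max \<bar>1-a\<bar> \<bar>a\<bar>"
    using finV by (intro Max_ins0_le) (auto simp: ind_def)
  moreover have "\<bar>1-a\<bar> \<le> Max (insert 0 ((\<lambda>v. \<bar>ind B v - a\<bar>) ` V))"
    using Max_ins0_ge[OF finV, of v0 "\<lambda>v. \<bar>ind B v - a\<bar>"] v0 BV by (auto simp: ind_def)
  moreover have "\<bar>a\<bar> \<le> Max (insert 0 ((\<lambda>v. \<bar>ind B v - a\<bar>) ` V))"
    using Max_ins0_ge[OF finV, of v1 "\<lambda>v. \<bar>ind B v - a\<bar>"] v1 by (auto simp: ind_def)
  ultimately show ?thesis unfolding nrm_def by simp
qed

lemma nrm_ind_shift_fin: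
  assumes finV: "finite V" and BV: "B \<subseteq> V"
  shows "nrm V m (ereal r) (\<lambda>v. ind B v - a) = (sum m B * \<bar>1-a\<bar> powr r + sum m (V-B) * \<bar>a\<bar> powr r) powr (1/r)"
proof -
  have "(\<Sum>v\<in>V. m v * \<bar>ind B v - a\<bar> powr r) = (\<Sum>v\<in>B. m v * \<bar>ind B v - a\<bar> powr r) + (\<Sum>v\<in>V-B. m v * \<bar>ind B v - a\<bar> powr r)"
    by (rule sum_split_B[OF finV BV])
  also have "\<dots> = sum m B * \<bar>1-a\<bar> powr r + sum m (V-B) * \<bar>a\<bar> powr r"
    by (simp add: ind_def sum_distrib_right)
  finally show ?thesis unfolding nrm_def by simp
qed

lemma G_exact:
  assumes nu: "1 \<le> \<nu>" and finV: "finite V" and mpos: "\<forall>v\<in>V. m v > 0"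
    and BV: "B \<subseteq> V" and Bne: "B \<noteq> {}" and VB: "V - B \<noteq> {}"
  shows "Fp \<nu> (sum m B) (sum m (V-B)) > 0"
    and "\<forall>a. nrm V m (dual_exp \<nu>) (\<lambda>v. ind B v - a) * Fp \<nu> (sum m B) (sum m (V-B)) \<ge> 1"
    and "\<exists>a. nrm V m (dual_exp \<nu>) (\<lambda>v. ind B v - a) * Fp \<nu> (sum m B) (sum m (V-B)) \<le> 1"
proof -
  define X where "X = sum m B"
  define Y where "Y = sum m (V-B)"
  have X: "X > 0" unfolding X_def using finV BV Bne mpos by (intro sum_pos) (auto intro: finite_subset)
  have Y: "Y > 0" unfolding Y_def using finV VB mpos by (intro sum_pos) auto
  have "Fp \<nu> X Y > 0 \<and> (\<forall>a. nrm V m (dual_exp \<nu>) (\<lambda>v. ind B v - a) * Fp \<nu> X Y \<ge> 1)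
        \<and> (\<exists>a. nrm V m (dual_exp \<nu>) (\<lambda>v. ind B v - a) * Fp \<nu> X Y \<le> 1)"
  proof (rule nu_cases[OF nu])
    assume inf: "\<nu> = \<infinity>"
    have d: "dual_exp \<nu> = ereal 1" using inf by (simp add: dual_exp_def)
    have N: "\<And>a. nrm V m (dual_exp \<nu>) (\<lambda>v. ind B v - a) = X * \<bar>1-a\<bar> + Y * \<bar>a\<bar>"
      unfolding d nrm_ind_shift_fin[OF finV BV] X_def[symmetric] Y_def[symmetric]
      using X Y by (simp add: add_nonneg_nonneg)
    have F: "Fp \<nu> X Y = 1 / min X Y" using inf by (simp add: Fp_def)
    have lb: "\<And>a. min X Y \<le> X * \<bar>1-a\<bar> + Y * \<bar>a\<bar>"
    proof -
      fix a
      have "min X Y * 1 \<le> min X Y * (\<bar>1-a\<bar> + \<bar>a\<bar>)" using X Y by (intro mult_left_mono) auto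
      also have "\<dots> \<le> X * \<bar>1-a\<bar> + Y * \<bar>a\<bar>"
        by (simp add: distrib_left add_mono mult_right_mono)
      finally show "min X Y \<le> X * \<bar>1-a\<bar> + Y * \<bar>a\<bar>" by simp
    qed
    show ?thesis
    proof (intro conjI allI)
      show "Fp \<nu> X Y > 0" using F X Y by simp
      fix a show "nrm V m (dual_exp \<nu>) (\<lambda>v. ind B v - a) * Fp \<nu> X Y \<ge> 1"
        unfolding N F using lb[of a] X Y by (simp add: field_simps)
    next
      show "\<exists>a. nrm V m (dual_exp \<nu>) (\<lambda>v. ind B v - a) * Fp \<nu> X Y \<le> 1"
        by (rule exI[of _ "if X \<le> Y then 0 else 1"]) (use X Y in \<open>auto simp: N F min_def\<close>)
    qed
  next
    assume one: "\<nu> = 1"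
    have d: "dual_exp \<nu> = \<infinity>" using one by (simp add: dual_exp_def)
    have N: "\<And>a. nrm V m (dual_exp \<nu>) (\<lambda>v. ind B v - a) = max \<bar>1-a\<bar> \<bar>a\<bar>"
      unfolding d by (rule nrm_ind_shift_inf[OF finV BV Bne VB])
    have F: "Fp \<nu> X Y = 2" using one X Y by (simp add: Fp_def)
    show ?thesis
    proof (intro conjI allI)
      show "Fp \<nu> X Y > 0" using F by simp
      fix a show "nrm V m (dual_exp \<nu>) (\<lambda>v. ind B v - a) * Fp \<nu> X Y \<ge> 1"
        unfolding N F by (auto simp: max_def abs_if)
    next
      show "\<exists>a. nrm V m (dual_exp \<nu>) (\<lambda>v. ind B v - a) * Fp \<nu> X Y \<le> 1"
        by (rule exI[of _ "1/2"]) (simp add: N F)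
    qed
  next
    fix p assume p: "\<nu> = ereal p" "p > 1"
    have d: "dual_exp \<nu> = ereal (p / (p - 1))" using p by (simp add: dual_exp_def one_ereal_def)
    have N: "\<And>a. nrm V m (dual_exp \<nu>) (\<lambda>v. ind B v - a) =
       (X * \<bar>1-a\<bar> powr (p / (p - 1)) + Y * \<bar>a\<bar> powr (p / (p - 1))) powr (1 / (p / (p - 1)))"
      unfolding d nrm_ind_shift_fin[OF finV BV] X_def Y_def by simp
    have F: "Fp \<nu> X Y = (X powr (1-p) + Y powr (1-p)) powr (1/p)" using p by (simp add: Fp_def)
    note sp = scalar_p[OF X Y p(2)]
    show ?thesis
    proof (intro conjI)
      show "Fp \<nu> X Y > 0" unfolding F using X Y
        by (metis add_pos_pos powr_gt_zero order_less_irrefl)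
      show "\<forall>a. nrm V m (dual_exp \<nu>) (\<lambda>v. ind B v - a) * Fp \<nu> X Y \<ge> 1"
        unfolding N F using sp(1) by simp
      show "\<exists>a. nrm V m (dual_exp \<nu>) (\<lambda>v. ind B v - a) * Fp \<nu> X Y \<le> 1"
        unfolding N F using sp(2) by simp
    qed
  qed
  then show "Fp \<nu> (sum m B) (sum m (V-B)) > 0"
    and "\<forall>a. nrm V m (dual_exp \<nu>) (\<lambda>v. ind B v - a) * Fp \<nu> (sum m B) (sum m (V-B)) \<ge> 1"
    and "\<exists>a. nrm V m (dual_exp \<nu>) (\<lambda>v. ind B v - a) * Fp \<nu> (sum m B) (sum m (V-B)) \<le> 1"
    unfolding X_def Y_def by auto
qed



lemma VertPt_gpoints[simp]: "VertPt v \<in> gpoints G \<longleftrightarrow> v \<in> verts G"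
  unfolding gpoints_def by auto

lemma EdgePt_gpoints[simp]: "EdgePt e t \<in> gpoints G \<longleftrightarrow> e \<in> edges G \<and> 0 < t \<and> t < len G e"
  unfolding gpoints_def by auto

definition lin :: "('v, 'e) mgraph \<Rightarrow> ('v \<Rightarrow> real) \<Rightarrow> ('v, 'e) gpoint \<Rightarrow> real" where
  "lin G \<phi> x = (case x of VertPt v \<Rightarrow> \<phi> v
     | EdgePt e t \<Rightarrow> \<phi> (src G e) + (\<phi> (tgt G e) - \<phi> (src G e)) * t / len G e)"

lemma lin_V[simp]: "lin G \<phi> (VertPt v) = \<phi> v" by (simp add: lin_def)
lemma lin_E[simp]: "lin G \<phi> (EdgePt e t) = \<phi> (src G e) + (\<phi> (tgt G e) - \<phi> (src G e)) * t / len G e"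
  by (simp add: lin_def)

lemma small_arith:
  fixes D s L e0 :: real
  assumes "L > 0" "e0 > 0" "0 \<le> s" "s \<le> e0 * L / (\<bar>D\<bar> + 1)"
  shows "\<bar>D * s / L\<bar> < e0"
proof -
  have "\<bar>D\<bar> * s \<le> \<bar>D\<bar> * (e0 * L / (\<bar>D\<bar> + 1))" using assms by (intro mult_left_mono) auto
  then have "\<bar>D\<bar> * s / L \<le> \<bar>D\<bar> * e0 / (\<bar>D\<bar> + 1)" using assms
    by (simp add: field_simps)
  also have "\<dots> < e0" using assms by (simp add: field_simps)
  finally show ?thesis using assms by (simp add: abs_mult)
qed

lemma lin_gcontinuous:
  assumes cg: "closed_graph G"
  shows "gcontinuous G (lin G \<phi>)"
  unfolding gcontinuous_def
proof (intro allI impI)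
  fix U :: "real set" assume U: "open U"
  let ?P = "{x \<in> gpoints G. lin G \<phi> x \<in> U}"
  have finE: "finite (edges G)" and lenpos: "\<forall>e\<in>edges G. len G e > 0"
    using cg unfolding closed_graph_def by auto
  show "gopen G ?P"
    unfolding gopen_def
  proof (intro conjI ballI impI)
    show "?P \<subseteq> gpoints G" by auto
  next
    fix e assume e: "e \<in> edges G"
    have "{t. 0 < t \<and> t < len G e \<and> EdgePt e t \<in> ?P} =
          {0<..<len G e} \<inter> (\<lambda>t. \<phi> (src G e) + (\<phi> (tgt G e) - \<phi> (src G e)) * t / len G e) -` U"
      using e by auto
    moreover have "open ({0<..<len G e} \<inter> (\<lambda>t. \<phi> (src G e) + (\<phi> (tgt G e) - \<phi> (src G e)) * t / len G e) -` U)"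
      using lenpos e by (intro open_Int open_greaterThanLessThan open_vimage U continuous_intros) auto
    ultimately show "open {t. 0 < t \<and> t < len G e \<and> EdgePt e t \<in> ?P}" by simp
  next
    fix v assume v: "v \<in> verts G" and vP: "VertPt v \<in> ?P"
    then have "\<phi> v \<in> U" by simp
    then obtain e0 where e0: "e0 > 0" "ball (\<phi> v) e0 \<subseteq> U" using U openE by blast
    define D where "D = (\<lambda>e. \<phi> (tgt G e) - \<phi> (src G e))"
    define \<epsilon> where "\<epsilon> = Min (insert 1 ((\<lambda>e. e0 * len G e / (\<bar>D e\<bar> + 1)) ` edges G))"
    have \<epsilon>pos: "\<epsilon> > 0" unfolding \<epsilon>_def using finE lenpos e0
      by (subst Min_gr_iff) (auto intro!: divide_pos_pos add_pos_nonneg)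
    have \<epsilon>le: "\<And>e. e \<in> edges G \<Longrightarrow> \<epsilon> \<le> e0 * len G e / (\<bar>D e\<bar> + 1)"
      unfolding \<epsilon>_def using finE by (intro Min_le) auto
    show "\<exists>\<epsilon>>0. \<forall>e\<in>edges G.
        (src G e = v \<longrightarrow> (\<forall>t. 0 < t \<and> t < \<epsilon> \<and> t < len G e \<longrightarrow> EdgePt e t \<in> ?P)) \<and>
        (tgt G e = v \<longrightarrow> (\<forall>t. 0 < t \<and> len G e - \<epsilon> < t \<and> t < len G e \<longrightarrow> EdgePt e t \<in> ?P))"
    proof (intro exI[of _ \<epsilon>] conjI \<epsilon>pos ballI impI allI)
      fix e t assume e: "e \<in> edges G" and s: "src G e = v" and t: "0 < t \<and> t < \<epsilon> \<and> t < len G e"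
      have "\<bar>D e * t / len G e\<bar> < e0"
        using small_arith[of "len G e" e0 t "D e"] e lenpos e0 t \<epsilon>le[OF e] by auto
      then have "lin G \<phi> (EdgePt e t) \<in> ball (\<phi> v) e0"
        using s unfolding D_def by (simp add: dist_real_def)
      then show "EdgePt e t \<in> ?P" using e0 e t by auto
    next
      fix e t assume e: "e \<in> edges G" and s: "tgt G e = v" and t: "0 < t \<and> len G e - \<epsilon> < t \<and> t < len G e"
      have L: "len G e > 0" using lenpos e by auto
      have "\<bar>D e * (len G e - t) / len G e\<bar> < e0"
        using small_arith[of "len G e" e0 "len G e - t" "D e"] L e0 t \<epsilon>le[OF e] by auto
      moreover have "lin G \<phi> (EdgePt e t) - \<phi> v = - (D e * (len G e - t) / len G e)"
        using s L unfolding D_def by (simp add: field_simps)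
      ultimately have "\<bar>lin G \<phi> (EdgePt e t) - \<phi> v\<bar> < e0"
        by (simp only: abs_minus_cancel)
      then have "lin G \<phi> (EdgePt e t) \<in> ball (\<phi> v) e0"
        by (simp add: dist_real_def abs_minus_commute)
      then show "EdgePt e t \<in> ?P" using e0 e t by auto
    qed
  qed
qed

lemma lin_C1Dir:
  assumes cg: "closed_graph G"
  shows "lin G \<phi> \<in> C1Dir G"
  unfolding C1Dir_def
proof (intro CollectI conjI ballI)
  show "gcontinuous G (lin G \<phi>)" by (rule lin_gcontinuous[OF cg])
next
  fix e assume e: "e \<in> edges G"
  show "\<exists>g. (\<forall>t\<in>{0<..<len G e}. ((\<lambda>s. lin G \<phi> (EdgePt e s)) has_real_derivative g t) (at t))
            \<and> uniformly_continuous_on {0<..<len G e} g"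
  proof (intro exI[of _ "\<lambda>_. (\<phi> (tgt G e) - \<phi> (src G e)) / len G e"] conjI ballI)
    have L: "len G e \<noteq> 0" using cg e unfolding closed_graph_def by force
    fix t show "((\<lambda>s. lin G \<phi> (EdgePt e s)) has_real_derivative (\<phi> (tgt G e) - \<phi> (src G e)) / len G e) (at t)"
      using L by (auto intro!: derivative_eq_intros)
  qed (rule uniformly_continuous_on_const)
next
  show "\<exists>V0 E0. finite V0 \<and> finite E0 \<and>
         (\<forall>x\<in>gpoints G. lin G \<phi> x \<noteq> 0 \<longrightarrow> (\<exists>v\<in>V0. x = VertPt v) \<or> (\<exists>e\<in>E0. x \<in> edge_interior G e))"
    using cg unfolding closed_graph_def
    by (intro exI[of _ "verts G"] exI[of _ "edges G"]) (auto simp: gpoints_def edge_interior_def)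
next
  fix v assume "v \<in> bdry G" then show "lin G \<phi> (VertPt v) = 0" using cg unfolding closed_graph_def by auto
qed

lemma lin_grad:
  assumes cg: "closed_graph G"
  shows "grad_norm1 G (lin G \<phi>) = Dsum (edges G) (src G) (tgt G) (wt G) \<phi>"
  unfolding grad_norm1_def Dsum_def
proof (rule sum.cong[OF refl])
  fix e assume e: "e \<in> edges G"
  have L: "len G e > 0" using cg e unfolding closed_graph_def by auto
  define D where "D = \<phi> (tgt G e) - \<phi> (src G e)"
  have "\<And>t. deriv (\<lambda>s. lin G \<phi> (EdgePt e s)) t = D / len G e"
    unfolding D_def using L by (intro DERIV_imp_deriv) (auto intro!: derivative_eq_intros)
  then have "(LBINT t:{0<..<len G e}. \<bar>deriv (\<lambda>s. lin G \<phi> (EdgePt e s)) t\<bar>) = (LBINT t:{0<..<len G e}. \<bar>D / len G e\<bar>)"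
    by simp
  also have "\<dots> = measure lborel {0<..<len G e} * \<bar>D / len G e\<bar>"
    using L by (subst set_integral_const) (auto simp: emeasure_lborel_Ioo)
  also have "\<dots> = \<bar>D\<bar>" using L by simp
  finally show "wt G e * (LBINT t:{0<..<len G e}. \<bar>deriv (\<lambda>s. lin G \<phi> (EdgePt e s)) t\<bar>) =
        wt G e * \<bar>\<phi> (src G e) - \<phi> (tgt G e)\<bar>"
    unfolding D_def by (simp add: abs_minus_commute)
qed



lemma gcont_vertex:
  assumes gc: "gcontinuous G f" and v: "v \<in> verts G" and eps: "\<epsilon> > 0"
  shows "\<exists>\<delta>>0. \<forall>e\<in>edges G.
     (src G e = v \<longrightarrow> (\<forall>t. 0 < t \<and> t < \<delta> \<and> t < len G e \<longrightarrow> \<bar>f (EdgePt e t) - f (VertPt v)\<bar> < \<epsilon>)) \<and>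
     (tgt G e = v \<longrightarrow> (\<forall>t. 0 < t \<and> len G e - \<delta> < t \<and> t < len G e \<longrightarrow> \<bar>f (EdgePt e t) - f (VertPt v)\<bar> < \<epsilon>))"
proof -
  let ?P = "{x \<in> gpoints G. f x \<in> ball (f (VertPt v)) \<epsilon>}"
  have "gopen G ?P" using gc unfolding gcontinuous_def by auto
  moreover have "VertPt v \<in> ?P" using v eps by simp
  ultimately obtain \<delta> where \<delta>: "\<delta> > 0" "\<forall>e\<in>edges G.
        (src G e = v \<longrightarrow> (\<forall>t. 0 < t \<and> t < \<delta> \<and> t < len G e \<longrightarrow> EdgePt e t \<in> ?P)) \<and>
        (tgt G e = v \<longrightarrow> (\<forall>t. 0 < t \<and> len G e - \<delta> < t \<and> t < len G e \<longrightarrow> EdgePt e t \<in> ?P))"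
    using v unfolding gopen_def by blast
  show ?thesis
    by (rule exI[of _ \<delta>]) (use \<delta> in \<open>auto simp: dist_real_def abs_minus_commute\<close>)
qed

lemma edge_bound:
  assumes cg: "closed_graph G" and e: "e \<in> edges G" and gc: "gcontinuous G f"
    and der: "\<forall>t\<in>{0<..<len G e}. ((\<lambda>s. f (EdgePt e s)) has_real_derivative g t) (at t)"
    and uc: "uniformly_continuous_on {0<..<len G e} g"
  shows "\<bar>f (VertPt (src G e)) - f (VertPt (tgt G e))\<bar> \<le> (LBINT t:{0<..<len G e}. \<bar>deriv (\<lambda>s. f (EdgePt e s)) t\<bar>)"
proof -
  define L where "L = len G e"
  have L: "L > 0" using cg e unfolding closed_graph_def L_def by auto
  have srcV: "src G e \<in> verts G" and tgtV: "tgt G e \<in> verts G" using cg e unfolding closed_graph_def by auto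
  define h where "h = (\<lambda>s. f (EdgePt e s))"
  define a where "a = f (VertPt (src G e))"
  define b where "b = f (VertPt (tgt G e))"
  obtain gx where gx: "uniformly_continuous_on (closure {0<..<L}) gx" "\<And>x. x \<in> {0<..<L} \<Longrightarrow> g x = gx x"
    using uniformly_continuous_on_extension_on_closure[OF uc[folded L_def]] by metis
  have cgx: "continuous_on {0..L} gx" using uniformly_continuous_imp_continuous[OF gx(1)] L by simp
  define hx where "hx = (\<lambda>s. if s \<le> 0 then a else if s \<ge> L then b else h s)"
  have hxder: "\<And>x. x \<in> {0<..<L} \<Longrightarrow> (hx has_vector_derivative gx x) (at x)"
  proof -
    fix x assume x: "x \<in> {0<..<L}"
    have "(h has_real_derivative g x) (at x)" using der x unfolding h_def L_def by auto
    then have "(hx has_real_derivative g x) (at x)"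
      by (rule has_field_derivative_transform_within_open[of _ _ _ "{0<..<L}"]) (use x in \<open>auto simp: hx_def\<close>)
    then show "(hx has_vector_derivative gx x) (at x)"
      using gx(2)[OF x] by (simp add: has_real_derivative_iff_has_vector_derivative)
  qed
  have chx: "continuous_on {0..L} hx"
    unfolding continuous_on_eq_continuous_within
  proof
    fix x assume x: "x \<in> {0..L}"
    consider "x = 0" | "x = L" | "x \<in> {0<..<L}" using x by fastforce
    then show "continuous (at x within {0..L}) hx"
    proof cases
      case 3
      have "(hx has_real_derivative gx x) (at x)"
        using hxder[OF 3] by (simp add: has_real_derivative_iff_has_vector_derivative)
      then have "isCont hx x" by (rule DERIV_isCont)
      then show ?thesis by (rule continuous_at_imp_continuous_at_within)
    next
      case 1
      show ?thesis unfolding continuous_within_eps_delta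
      proof (intro allI impI)
        fix \<epsilon> :: real assume eps: "\<epsilon> > 0"
        obtain \<delta> where \<delta>: "\<delta> > 0" "\<forall>t. 0 < t \<and> t < \<delta> \<and> t < L \<longrightarrow> \<bar>h t - a\<bar> < \<epsilon>"
          using gcont_vertex[OF gc srcV eps] e unfolding h_def a_def L_def by blast
        show "\<exists>\<delta>>0. \<forall>x'\<in>{0..L}. dist x' x < \<delta> \<longrightarrow> dist (hx x') (hx x) < \<epsilon>"
        proof (intro exI[of _ "min \<delta> L"] conjI ballI impI)
          show "min \<delta> L > 0" using \<delta> L by simp
          fix x' assume x': "x' \<in> {0..L}" "dist x' x < min \<delta> L"
          show "dist (hx x') (hx x) < \<epsilon>"
          proof (cases "x' = 0")
            case True then show ?thesis using 1 eps by (simp add: hx_def)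
          next
            case False
            then have "0 < x'" "x' < L" "x' < \<delta>" using x' 1 by (auto simp: dist_real_def)
            then show ?thesis using \<delta>(2) 1 L by (auto simp: hx_def dist_real_def)
          qed
        qed
      qed
    next
      case 2
      show ?thesis unfolding continuous_within_eps_delta
      proof (intro allI impI)
        fix \<epsilon> :: real assume eps: "\<epsilon> > 0"
        obtain \<delta> where \<delta>: "\<delta> > 0" "\<forall>t. 0 < t \<and> L - \<delta> < t \<and> t < L \<longrightarrow> \<bar>h t - b\<bar> < \<epsilon>"
          using gcont_vertex[OF gc tgtV eps] e unfolding h_def b_def L_def by blast
        show "\<exists>\<delta>>0. \<forall>x'\<in>{0..L}. dist x' x < \<delta> \<longrightarrow> dist (hx x') (hx x) < \<epsilon>"
        proof (intro exI[of _ "min \<delta> L"] conjI ballI impI)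
          show "min \<delta> L > 0" using \<delta> L by simp
          fix x' assume x': "x' \<in> {0..L}" "dist x' x < min \<delta> L"
          show "dist (hx x') (hx x) < \<epsilon>"
          proof (cases "x' = L")
            case True then show ?thesis using 2 eps L by (simp add: hx_def)
          next
            case False
            then have "0 < x'" "x' < L" "L - \<delta> < x'" using x' 2 by (auto simp: dist_real_def)
            then show ?thesis using \<delta>(2) 2 L by (auto simp: hx_def dist_real_def)
          qed
        qed
      qed
    qed
  qed
  have ftc: "(gx has_integral (hx L - hx 0)) {0..L}"
    using L chx hxder by (intro fundamental_theorem_of_calculus_interior) auto
  have hxL: "hx L - hx 0 = b - a" using L by (simp add: hx_def)
  have "integral {0..L} gx = b - a" using integral_unique[OF ftc] hxL by simp
  then have "\<bar>a - b\<bar> = norm (integral {0..L} gx)" by (simp add: abs_minus_commute)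
  also have "\<dots> \<le> integral {0..L} (\<lambda>t. \<bar>gx t\<bar>)"
  proof (rule integral_norm_bound_integral)
    show "gx integrable_on {0..L}" by (rule integrable_continuous_real[OF cgx])
    have "continuous_on {0..L} (\<lambda>t. \<bar>gx t\<bar>)" using cgx by (rule continuous_on_rabs)
    then show "(\<lambda>t. \<bar>gx t\<bar>) integrable_on {0..L}" by (rule integrable_continuous_real)
    fix x show "norm (gx x) \<le> \<bar>gx x\<bar>" by simp
  qed
  also have "\<dots> = integral {0<..<L} (\<lambda>t. \<bar>gx t\<bar>)" by (rule integral_open_interval_real)
  also have "\<dots> = (LBINT t:{0<..<L}. \<bar>gx t\<bar>)"
  proof -
    have "continuous_on {0..L} (\<lambda>t. \<bar>gx t\<bar>)" using cgx by (rule continuous_on_rabs)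
    then have "set_integrable lborel {0..L} (\<lambda>t. \<bar>gx t\<bar>)"
      unfolding set_integrable_def by (intro borel_integrable_compact) auto
    moreover have "{0<..<L} \<in> sets lborel" by simp
    moreover have "{0<..<L} \<subseteq> {0..L}" by auto
    ultimately have "set_integrable lborel {0<..<L} (\<lambda>t. \<bar>gx t\<bar>)"
      by (rule set_integrable_subset)
    then show ?thesis by (rule set_borel_integral_eq_integral(2)[symmetric])
  qed
  also have "\<dots> = (LBINT t:{0<..<L}. \<bar>deriv h t\<bar>)"
  proof (rule set_lebesgue_integral_cong)
    show "{0<..<L} \<in> sets lborel" by simp
    show "\<forall>x. x \<in> {0<..<L} \<longrightarrow> \<bar>gx x\<bar> = \<bar>deriv h x\<bar>"
    proof (intro allI impI)
      fix x assume x: "x \<in> {0<..<L}"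
      have "deriv h x = g x" using der x unfolding h_def L_def by (intro DERIV_imp_deriv) auto
      then show "\<bar>gx x\<bar> = \<bar>deriv h x\<bar>" using gx(2)[OF x] by simp
    qed
  qed
  finally show ?thesis unfolding a_def b_def h_def L_def .
qed

lemma grad_lower:
  assumes cg: "closed_graph G" and f: "f \<in> C1Dir G"
  shows "Dsum (edges G) (src G) (tgt G) (wt G) (\<lambda>v. f (VertPt v)) \<le> grad_norm1 G f"
  unfolding grad_norm1_def Dsum_def
proof (rule sum_mono)
  fix e assume e: "e \<in> edges G"
  have gc: "gcontinuous G f" using f unfolding C1Dir_def by auto
  obtain g where g: "\<forall>t\<in>{0<..<len G e}. ((\<lambda>s. f (EdgePt e s)) has_real_derivative g t) (at t)"
      "uniformly_continuous_on {0<..<len G e} g"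
    using f e unfolding C1Dir_def by blast
  have w: "wt G e \<ge> 0" using cg e unfolding closed_graph_def by (auto intro: less_imp_le)
  show "wt G e * \<bar>f (VertPt (src G e)) - f (VertPt (tgt G e))\<bar> \<le>
        wt G e * (LBINT t:{0<..<len G e}. \<bar>deriv (\<lambda>s. f (EdgePt e s)) t\<bar>)"
    by (rule mult_left_mono[OF edge_bound[OF cg e gc g] w])
qed



lemma gfrontier_sub_gpoints: "gfrontier G S \<subseteq> gpoints G"
  unfolding gfrontier_def gclosure_def by auto

lemma in_gclosure_self: "x \<in> S \<Longrightarrow> S \<subseteq> gpoints G \<Longrightarrow> x \<in> gclosure G S"
  unfolding gclosure_def by auto

lemma gclosureD: "x \<in> gclosure G S \<Longrightarrow> gopen G U \<Longrightarrow> x \<in> U \<Longrightarrow> U \<inter> S \<noteq> {}"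
  unfolding gclosure_def by simp

lemma gclosureI: "x \<in> gpoints G \<Longrightarrow> (\<And>U. gopen G U \<Longrightarrow> x \<in> U \<Longrightarrow> U \<inter> S \<noteq> {}) \<Longrightarrow> x \<in> gclosure G S"
  unfolding gclosure_def by simp

lemma gclosure_gpoints: "x \<in> gclosure G S \<Longrightarrow> x \<in> gpoints G"
  unfolding gclosure_def by simp

lemma gclosure_mono: "S \<subseteq> T \<Longrightarrow> gclosure G S \<subseteq> gclosure G T"
proof
  fix x assume st: "S \<subseteq> T" and x: "x \<in> gclosure G S"
  show "x \<in> gclosure G T"
  proof (rule gclosureI)
    show "x \<in> gpoints G" by (rule gclosure_gpoints[OF x])
    fix U assume "gopen G U" "x \<in> U"
    then have "U \<inter> S \<noteq> {}" by (rule gclosureD[OF x])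
    then show "U \<inter> T \<noteq> {}" using st by blast
  qed
qed

lemma level_gopen:
  assumes "gcontinuous G f"
  shows "gopen G {x\<in>gpoints G. f x > c}" and "gopen G {x\<in>gpoints G. f x < c}"
proof -
  have "gopen G {x\<in>gpoints G. f x \<in> {c<..}}" using assms unfolding gcontinuous_def by (meson open_greaterThan)
  then show "gopen G {x\<in>gpoints G. f x > c}" by simp
  have "gopen G {x\<in>gpoints G. f x \<in> {..<c}}" using assms unfolding gcontinuous_def by (meson open_lessThan)
  then show "gopen G {x\<in>gpoints G. f x < c}" by simp
qed

lemma level_frontier:
  assumes gc: "gcontinuous G f"
  shows "gfrontier G {x\<in>gpoints G. f x > c} \<subseteq> {x\<in>gpoints G. f x = c}"
proof
  fix x assume x: "x \<in> gfrontier G {x\<in>gpoints G. f x > c}"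
  let ?S = "{x\<in>gpoints G. f x > c}"
  have xg: "x \<in> gpoints G" using x gfrontier_sub_gpoints by blast
  have c1: "x \<in> gclosure G ?S" and c2: "x \<in> gclosure G (gpoints G - ?S)"
    using x unfolding gfrontier_def by auto
  have "\<not> f x < c"
  proof
    assume "f x < c"
    then have "x \<in> {x\<in>gpoints G. f x < c}" using xg by simp
    then have "{x\<in>gpoints G. f x < c} \<inter> ?S \<noteq> {}"
      by (rule gclosureD[OF c1 level_gopen(2)[OF gc, of c]])
    then show False by auto
  qed
  moreover have "\<not> f x > c"
  proof
    assume "f x > c"
    then have "x \<in> ?S" using xg by simp
    then have "?S \<inter> (gpoints G - ?S) \<noteq> {}"
      by (rule gclosureD[OF c2 level_gopen(1)[OF gc, of c]])
    then show False by auto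
  qed
  ultimately show "x \<in> {x\<in>gpoints G. f x = c}" using xg by auto
qed

lemma Dsum_ind:
  assumes "finite E"
  shows "Dsum E s t w (ind B) = sum w {e\<in>E. (s e \<in> B) \<noteq> (t e \<in> B)}"
proof -
  have "Dsum E s t w (ind B) = (\<Sum>e\<in>E. if (s e \<in> B) \<noteq> (t e \<in> B) then w e else 0)"
    unfolding Dsum_def by (intro sum.cong) (auto simp: ind_def)
  also have "\<dots> = sum w {e\<in>E. (s e \<in> B) \<noteq> (t e \<in> B)}"
    using assms by (simp add: sum.inter_filter)
  finally show ?thesis .
qed

lemma vmeasure_eq: "vmeasure G \<Omega> = sum (vmeas G) {v\<in>verts G. VertPt v \<in> \<Omega>}"
  unfolding vmeasure_def by simp

lemma OmegaB:
  assumes cg: "closed_graph G" and BV: "B \<subseteq> verts G"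
  defines "\<Omega> \<equiv> {x\<in>gpoints G. lin G (ind B) x > 1/2}"
  shows "admissible G \<Omega>"
    and "area G \<Omega> \<le> Dsum (edges G) (src G) (tgt G) (wt G) (ind B)"
    and "vmeasure G \<Omega> = sum (vmeas G) B"
    and "vmeasure G (gpoints G - \<Omega>) = sum (vmeas G) (verts G - B)"
proof -
  have finE: "finite (edges G)" and finV: "finite (verts G)" and bd: "bdry G = {}"
    and ed: "\<forall>e\<in>edges G. src G e \<in> verts G \<and> tgt G e \<in> verts G \<and> len G e > 0 \<and> wt G e > 0"
    using cg unfolding closed_graph_def by auto
  have gc: "gcontinuous G (lin G (ind B))" by (rule lin_gcontinuous[OF cg])
  define C where "C = {e\<in>edges G. (src G e \<in> B) \<noteq> (tgt G e \<in> B)}"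
  define pt where "pt = (\<lambda>e. EdgePt e (len G e / 2) :: ('a, 'b) gpoint)"
  have Fr: "gfrontier G \<Omega> \<subseteq> pt ` C"
  proof
    fix x assume "x \<in> gfrontier G \<Omega>"
    then have x: "x \<in> gpoints G" "lin G (ind B) x = 1/2"
      using level_frontier[OF gc, of "1/2"] unfolding \<Omega>_def by auto
    show "x \<in> pt ` C"
    proof (cases x)
      case (VertPt v)
      then have "ind B v = 1/2" using x by simp
      then show ?thesis by (simp add: ind_def split: if_splits)
    next
      case (EdgePt e t)
      then have e: "e \<in> edges G" "0 < t" "t < len G e" using x by auto
      have L: "len G e > 0" using ed e by auto
      have eq: "ind B (src G e) + (ind B (tgt G e) - ind B (src G e)) * t / len G e = 1/2"
        using x EdgePt by simp
      have "e \<in> C \<and> t = len G e / 2"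
      proof (cases "src G e \<in> B"; cases "tgt G e \<in> B")
        assume "src G e \<in> B" "tgt G e \<in> B" then show ?thesis using eq by (simp add: ind_def)
      next
        assume "src G e \<notin> B" "tgt G e \<notin> B" then show ?thesis using eq by (simp add: ind_def)
      next
        assume a: "src G e \<in> B" "tgt G e \<notin> B"
        then have "1 - t / len G e = 1/2" using eq by (simp add: ind_def)
        then show ?thesis using a e L unfolding C_def by (auto simp: field_simps)
      next
        assume a: "src G e \<notin> B" "tgt G e \<in> B"
        then have "t / len G e = 1/2" using eq by (simp add: ind_def)
        then show ?thesis using a e L unfolding C_def by (auto simp: field_simps)
      qed
      then show ?thesis using EdgePt unfolding pt_def by auto
    qed
  qed
  have finC: "finite C" using finE unfolding C_def by auto
  have finFr: "finite (gfrontier G \<Omega>)" using Fr finC finite_subset by blast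
  show "admissible G \<Omega>" unfolding admissible_def
    using level_gopen(1)[OF gc, of "1/2"] finFr bd unfolding \<Omega>_def by auto
  have novert: "{v. VertPt v \<in> gfrontier G \<Omega>} = {}" using Fr unfolding pt_def by auto
  have "area G \<Omega> = (\<Sum>x\<in>gfrontier G \<Omega> - range VertPt. wt G (point_edge x))"
    unfolding area_def novert by simp
  also have "\<dots> \<le> (\<Sum>x\<in>pt ` C. wt G (point_edge x))"
  proof (rule sum_mono2)
    show "finite (pt ` C)" using finC by simp
    show "gfrontier G \<Omega> - range VertPt \<subseteq> pt ` C" using Fr by auto
    fix x assume "x \<in> pt ` C - (gfrontier G \<Omega> - range VertPt)"
    then obtain e where "e \<in> C" "x = pt e" by auto
    then show "0 \<le> wt G (point_edge x)" using ed unfolding C_def pt_def by (auto intro: less_imp_le)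
  qed
  also have "\<dots> = sum (wt G) C"
  proof -
    have "inj_on pt C" unfolding pt_def inj_on_def by auto
    then show ?thesis by (simp add: sum.reindex pt_def)
  qed
  also have "\<dots> = Dsum (edges G) (src G) (tgt G) (wt G) (ind B)"
    unfolding Dsum_ind[OF finE] C_def ..
  finally show "area G \<Omega> \<le> Dsum (edges G) (src G) (tgt G) (wt G) (ind B)" .
  have "{v\<in>verts G. VertPt v \<in> \<Omega>} = B" using BV unfolding \<Omega>_def by (auto simp: ind_def)
  then show "vmeasure G \<Omega> = sum (vmeas G) B" by (simp add: vmeasure_eq)
  have "{v\<in>verts G. VertPt v \<in> gpoints G - \<Omega>} = verts G - B" using BV unfolding \<Omega>_def by (auto simp: ind_def)
  then show "vmeasure G (gpoints G - \<Omega>) = sum (vmeas G) (verts G - B)" by (simp add: vmeasure_eq)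
qed



lemma gopen_edge: "gopen G U \<Longrightarrow> e \<in> edges G \<Longrightarrow> open {t. 0 < t \<and> t < len G e \<and> EdgePt e t \<in> U}"
  by (simp add: gopen_def)

lemma gopen_vert: "gopen G U \<Longrightarrow> v \<in> verts G \<Longrightarrow> VertPt v \<in> U \<Longrightarrow> (\<exists>\<epsilon>>0. \<forall>e\<in>edges G.
        (src G e = v \<longrightarrow> (\<forall>t. 0 < t \<and> t < \<epsilon> \<and> t < len G e \<longrightarrow> EdgePt e t \<in> U)) \<and>
        (tgt G e = v \<longrightarrow> (\<forall>t. 0 < t \<and> len G e - \<epsilon> < t \<and> t < len G e \<longrightarrow> EdgePt e t \<in> U)))"
  by (simp add: gopen_def)

lemma not_gclosureE: "x \<in> gpoints G \<Longrightarrow> x \<notin> gclosure G S \<Longrightarrow> \<exists>U. gopen G U \<and> x \<in> U \<and> U \<inter> S = {}"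
  unfolding gclosure_def by auto

lemma near_vertex:
  assumes U: "gopen G U" and vU: "VertPt v \<in> U" and v: "v \<in> verts G" and e: "e \<in> edges G"
    and ve: "v = src G e \<or> v = tgt G e" and L: "len G e > 0"
  shows "\<exists>t. 0 < t \<and> t < len G e \<and> EdgePt e t \<in> U"
proof -
  obtain \<epsilon> where \<epsilon>: "\<epsilon> > 0" and h: "\<forall>e\<in>edges G.
        (src G e = v \<longrightarrow> (\<forall>t. 0 < t \<and> t < \<epsilon> \<and> t < len G e \<longrightarrow> EdgePt e t \<in> U)) \<and>
        (tgt G e = v \<longrightarrow> (\<forall>t. 0 < t \<and> len G e - \<epsilon> < t \<and> t < len G e \<longrightarrow> EdgePt e t \<in> U))"
    using gopen_vert[OF U v vU] by blast
  define d where "d = min \<epsilon> (len G e) / 2"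
  have d: "0 < d" "d < \<epsilon>" "d < len G e" unfolding d_def using \<epsilon> L by auto
  from ve show ?thesis
  proof
    assume "v = src G e"
    then have "EdgePt e d \<in> U" using h e d by auto
    then show ?thesis using d by auto
  next
    assume "v = tgt G e"
    then have "EdgePt e (len G e - d) \<in> U" using h e d by auto
    then show ?thesis using d by (intro exI[of _ "len G e - d"]) auto
  qed
qed

lemma edge_cut:
  assumes cg: "closed_graph G" and O: "gopen G \<Omega>" and e: "e \<in> edges G"
    and uw: "(u = src G e \<and> w = tgt G e) \<or> (u = tgt G e \<and> w = src G e)"
    and uO: "VertPt u \<in> \<Omega>" and wO: "VertPt w \<notin> \<Omega>"
    and nofr: "\<forall>t. EdgePt e t \<notin> gfrontier G \<Omega>"
  shows "VertPt w \<in> gfrontier G \<Omega> \<and> VertPt w \<in> gclosure G (\<Omega> \<inter> edge_interior G e)"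
proof -
  have ed: "src G e \<in> verts G" "tgt G e \<in> verts G" "len G e > 0"
    using cg e unfolding closed_graph_def by auto
  have uV: "u \<in> verts G" and wV: "w \<in> verts G" using uw ed by auto
  define L where "L = len G e"
  define J where "J = {t. 0 < t \<and> t < L \<and> EdgePt e t \<in> \<Omega>}"
  define K where "K = (\<Union>U\<in>{U. gopen G U \<and> U \<inter> \<Omega> = {}}. {t. 0 < t \<and> t < L \<and> EdgePt e t \<in> U})"
  have oJ: "open J" using gopen_edge[OF O e] unfolding J_def L_def .
  have oK: "open K" unfolding K_def
  proof (rule open_UN, rule ballI)
    fix U assume "U \<in> {U. gopen G U \<and> U \<inter> \<Omega> = {}}"
    then have "gopen G U" by simp
    from gopen_edge[OF this e] show "open {t. 0 < t \<and> t < L \<and> EdgePt e t \<in> U}" unfolding L_def .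
  qed
  have JK: "J \<inter> K \<inter> {0<..<L} = {}"
  proof (rule ccontr)
    assume "J \<inter> K \<inter> {0<..<L} \<noteq> {}"
    then obtain t where tJ: "t \<in> J" and tK: "t \<in> K" by blast
    from tK obtain U where "gopen G U" "U \<inter> \<Omega> = {}" "EdgePt e t \<in> U" unfolding K_def by auto
    moreover have "EdgePt e t \<in> \<Omega>" using tJ unfolding J_def by simp
    ultimately show False by blast
  qed
  have cover: "{0<..<L} \<subseteq> J \<union> K"
  proof
    fix t assume t: "t \<in> {0<..<L}"
    show "t \<in> J \<union> K"
    proof (cases "EdgePt e t \<in> \<Omega>")
      case True then show ?thesis using t unfolding J_def by auto
    next
      case False
      have xg: "EdgePt e t \<in> gpoints G" using t e unfolding L_def by simp
      have "EdgePt e t \<in> gclosure G (gpoints G - \<Omega>)"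
        by (rule in_gclosure_self) (use xg False in auto)
      then have "EdgePt e t \<notin> gclosure G \<Omega>" using nofr unfolding gfrontier_def by blast
      then obtain U where U: "gopen G U" "EdgePt e t \<in> U" "U \<inter> \<Omega> = {}"
        using not_gclosureE[OF xg] by blast
      then have "t \<in> K" using t unfolding K_def by auto
      then show ?thesis by simp
    qed
  qed
  obtain t0 where t0: "0 < t0" "t0 < L" "EdgePt e t0 \<in> \<Omega>"
    using near_vertex[OF O uO uV e _ ed(3)] uw unfolding L_def by blast
  have "J \<inter> {0<..<L} \<noteq> {}" using t0 unfolding J_def by auto
  then have "K \<inter> {0<..<L} = {}" using connectedD[OF connected_Ioo oJ oK JK cover] by blast
  then have allJ: "\<And>t. 0 < t \<Longrightarrow> t < L \<Longrightarrow> EdgePt e t \<in> \<Omega>"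
  proof -
    fix t assume "0 < t" "t < L"
    then have "t \<in> {0<..<L}" by simp
    then have "t \<in> J" using cover \<open>K \<inter> {0<..<L} = {}\<close> by blast
    then show "EdgePt e t \<in> \<Omega>" unfolding J_def by simp
  qed
  have cl: "VertPt w \<in> gclosure G (\<Omega> \<inter> edge_interior G e)"
  proof (rule gclosureI)
    show "VertPt w \<in> gpoints G" using wV by simp
    fix U assume U: "gopen G U" "VertPt w \<in> U"
    obtain t where t: "0 < t" "t < L" "EdgePt e t \<in> U"
      using near_vertex[OF U wV e _ ed(3)] uw unfolding L_def by blast
    then have "EdgePt e t \<in> \<Omega> \<inter> edge_interior G e" using allJ unfolding edge_interior_def L_def by auto
    then show "U \<inter> (\<Omega> \<inter> edge_interior G e) \<noteq> {}" using t by blast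
  qed
  have "VertPt w \<in> gclosure G \<Omega>" using gclosure_mono[of "\<Omega> \<inter> edge_interior G e" \<Omega> G] cl by blast
  moreover have "VertPt w \<in> gclosure G (gpoints G - \<Omega>)"
    by (rule in_gclosure_self) (use wV wO in auto)
  ultimately show ?thesis using cl unfolding gfrontier_def by blast
qed

lemma area_lower:
  assumes cg: "closed_graph G" and adm: "admissible G \<Omega>"
  shows "Dsum (edges G) (src G) (tgt G) (wt G) (ind {v\<in>verts G. VertPt v \<in> \<Omega>}) \<le> area G \<Omega>"
proof -
  have finE: "finite (edges G)" and finV: "finite (verts G)"
    and ed: "\<forall>e\<in>edges G. src G e \<in> verts G \<and> tgt G e \<in> verts G \<and> len G e > 0 \<and> wt G e > 0"
    using cg unfolding closed_graph_def by auto
  have O: "gopen G \<Omega>" and finFr: "finite (gfrontier G \<Omega>)" using adm unfolding admissible_def by auto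
  define B where "B = {v\<in>verts G. VertPt v \<in> \<Omega>}"
  define Fr where "Fr = gfrontier G \<Omega>"
  define C where "C = {e\<in>edges G. (src G e \<in> B) \<noteq> (tgt G e \<in> B)}"
  define C1 where "C1 = {e\<in>C. \<exists>t. EdgePt e t \<in> Fr}"
  define C2 where "C2 = C - C1"
  have finC: "finite C" using finE unfolding C_def by auto
  have sumC: "sum (wt G) C = sum (wt G) C1 + sum (wt G) C2"
    unfolding C2_def using finC by (subst sum.subset_diff[of C1 C]) (auto simp: C1_def)
  define pt where "pt = (\<lambda>e. EdgePt e (SOME t. EdgePt e t \<in> Fr) :: ('a, 'b) gpoint)"
  have ptFr: "\<And>e. e \<in> C1 \<Longrightarrow> pt e \<in> Fr - range VertPt"
    unfolding pt_def C1_def by (auto intro: someI_ex)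
  have S1: "sum (wt G) C1 \<le> (\<Sum>x\<in>Fr - range VertPt. wt G (point_edge x))"
  proof -
    have "inj_on pt C1" unfolding pt_def inj_on_def by auto
    then have "sum (wt G) C1 = (\<Sum>x\<in>pt ` C1. wt G (point_edge x))"
      by (simp add: sum.reindex pt_def)
    also have "\<dots> \<le> (\<Sum>x\<in>Fr - range VertPt. wt G (point_edge x))"
    proof (rule sum_mono2)
      show "finite (Fr - range VertPt)" using finFr unfolding Fr_def by simp
      show "pt ` C1 \<subseteq> Fr - range VertPt" using ptFr by auto
      fix x assume "x \<in> Fr - range VertPt - pt ` C1"
      then have "x \<in> gpoints G" "x \<notin> range VertPt" using gfrontier_sub_gpoints unfolding Fr_def by auto
      then obtain e t where "x = EdgePt e t" "e \<in> edges G" by (cases x) auto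
      then show "0 \<le> wt G (point_edge x)" using ed by (auto intro: less_imp_le)
    qed
    finally show ?thesis .
  qed
  define Vf where "Vf = {v. VertPt v \<in> Fr}"
  define Ev where "Ev = (\<lambda>v. {e\<in>edges G. VertPt v \<in> gclosure G (\<Omega> \<inter> edge_interior G e)})"
  define ww where "ww = (\<lambda>e. if src G e \<in> B then tgt G e else src G e)"
  have key: "\<And>e. e \<in> C2 \<Longrightarrow> VertPt (ww e) \<in> Fr \<and> VertPt (ww e) \<in> gclosure G (\<Omega> \<inter> edge_interior G e)"
  proof -
    fix e assume e2: "e \<in> C2"
    then have eE: "e \<in> edges G" and cut: "(src G e \<in> B) \<noteq> (tgt G e \<in> B)"
      and nofr: "\<forall>t. EdgePt e t \<notin> Fr" unfolding C2_def C1_def C_def by auto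
    have sV: "src G e \<in> verts G" and tV: "tgt G e \<in> verts G" using ed eE by auto
    show "VertPt (ww e) \<in> Fr \<and> VertPt (ww e) \<in> gclosure G (\<Omega> \<inter> edge_interior G e)"
    proof (cases "src G e \<in> B")
      case True
      then have "tgt G e \<notin> B" using cut by auto
      then have "VertPt (tgt G e) \<notin> \<Omega>" using tV unfolding B_def by auto
      moreover have "VertPt (src G e) \<in> \<Omega>" using True unfolding B_def by auto
      ultimately show ?thesis using edge_cut[OF cg O eE, of "src G e" "tgt G e"] nofr True
        unfolding ww_def Fr_def by auto
    next
      case False
      then have "tgt G e \<in> B" using cut by auto
      then have "VertPt (tgt G e) \<in> \<Omega>" unfolding B_def by auto
      moreover have "VertPt (src G e) \<notin> \<Omega>" using False sV unfolding B_def by auto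
      ultimately show ?thesis using edge_cut[OF cg O eE, of "tgt G e" "src G e"] nofr False
        unfolding ww_def Fr_def by auto
    qed
  qed
  have finVf: "finite Vf" unfolding Vf_def
  proof -
    have "inj VertPt" by (auto simp: inj_def)
    then show "finite {v. VertPt v \<in> Fr}"
      using finite_vimageI[OF finFr[folded Fr_def], of VertPt] by (simp add: vimage_def)
  qed
  have finEv: "\<And>v. finite (Ev v)" unfolding Ev_def using finE by auto
  have S2: "sum (wt G) C2 \<le> (\<Sum>v\<in>Vf. \<Sum>e\<in>Ev v. wt G e)"
  proof -
    have "inj_on (\<lambda>e. (ww e, e)) C2" unfolding inj_on_def by auto
    then have "sum (wt G) C2 = (\<Sum>p\<in>(\<lambda>e. (ww e, e)) ` C2. wt G (snd p))"
      by (simp add: sum.reindex)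
    also have "\<dots> \<le> (\<Sum>p\<in>Sigma Vf Ev. wt G (snd p))"
    proof (rule sum_mono2)
      show "finite (Sigma Vf Ev)" using finVf finEv by auto
      show "(\<lambda>e. (ww e, e)) ` C2 \<subseteq> Sigma Vf Ev"
      proof
        fix p assume "p \<in> (\<lambda>e. (ww e, e)) ` C2"
        then obtain e where e: "e \<in> C2" "p = (ww e, e)" by auto
        have "e \<in> edges G" using e unfolding C2_def C_def by auto
        then show "p \<in> Sigma Vf Ev" using key[OF e(1)] e unfolding Vf_def Ev_def by auto
      qed
      fix p assume "p \<in> Sigma Vf Ev - (\<lambda>e. (ww e, e)) ` C2"
      then have "snd p \<in> edges G" unfolding Ev_def by auto
      then show "0 \<le> wt G (snd p)" using ed by (auto intro: less_imp_le)
    qed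
    also have "\<dots> = (\<Sum>v\<in>Vf. \<Sum>e\<in>Ev v. wt G e)"
      using finVf finEv by (subst sum.Sigma) (auto simp: case_prod_unfold)
    finally show ?thesis .
  qed
  have "Dsum (edges G) (src G) (tgt G) (wt G) (ind B) = sum (wt G) C"
    unfolding Dsum_ind[OF finE] C_def ..
  also have "\<dots> \<le> (\<Sum>x\<in>Fr - range VertPt. wt G (point_edge x)) + (\<Sum>v\<in>Vf. \<Sum>e\<in>Ev v. wt G e)"
    using sumC S1 S2 by simp
  also have "\<dots> = area G \<Omega>" unfolding area_def Fr_def Vf_def Ev_def ..
  finally show ?thesis unfolding B_def .
qed



definition AdmS :: "('v, 'e) mgraph \<Rightarrow> ('v, 'e) gpoint set set" where
  "AdmS G = {\<Omega>. admissible G \<Omega> \<and> 0 < vmeasure G \<Omega> \<and> 0 < vmeasure G (gpoints G - \<Omega>)}"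

lemma Itilde'_eq: "Itilde' G \<nu> = (INF \<Omega>\<in>AdmS G. ereal (area G \<Omega> * Fp \<nu> (vmeasure G \<Omega>) (vmeasure G (gpoints G - \<Omega>))))"
  unfolding Itilde'_def AdmS_def Fp_def ..

lemma Itilde_eq: "Itilde G \<nu> = (INF \<Omega>\<in>AdmS G. ereal (area G \<Omega> * min (vmeasure G \<Omega>) (vmeasure G (gpoints G - \<Omega>)) powr (inv_exp \<nu> - 1)))"
  unfolding Itilde_def AdmS_def ..

lemma Adm_facts:
  assumes cg: "closed_graph G" and O: "\<Omega> \<in> AdmS G"
  defines "B \<equiv> {v\<in>verts G. VertPt v \<in> \<Omega>}"
  shows "B \<subseteq> verts G" "B \<noteq> {}" "verts G - B \<noteq> {}"
    "vmeasure G \<Omega> = sum (vmeas G) B" "vmeasure G (gpoints G - \<Omega>) = sum (vmeas G) (verts G - B)"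
    "Dsum (edges G) (src G) (tgt G) (wt G) (ind B) \<le> area G \<Omega>"
proof -
  show "B \<subseteq> verts G" unfolding B_def by auto
  show m1: "vmeasure G \<Omega> = sum (vmeas G) B" unfolding B_def vmeasure_eq ..
  have "{v\<in>verts G. VertPt v \<in> gpoints G - \<Omega>} = verts G - B" unfolding B_def by auto
  then show m2: "vmeasure G (gpoints G - \<Omega>) = sum (vmeas G) (verts G - B)" by (simp add: vmeasure_eq)
  show "B \<noteq> {}" using O m1 unfolding AdmS_def by auto
  show "verts G - B \<noteq> {}"
  proof
    assume "verts G - B = {}"
    then have "vmeasure G (gpoints G - \<Omega>) = 0" using m2 by (metis sum.empty)
    then show False using O unfolding AdmS_def by simp
  qed
  show "Dsum (edges G) (src G) (tgt G) (wt G) (ind B) \<le> area G \<Omega>"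
    using area_lower[OF cg] O unfolding AdmS_def B_def by auto
qed

lemma OmegaB_Adm:
  assumes cg: "closed_graph G" and BV: "B \<subseteq> verts G" and Bne: "B \<noteq> {}" and VB: "verts G - B \<noteq> {}"
  shows "\<exists>\<Omega>\<in>AdmS G. area G \<Omega> \<le> Dsum (edges G) (src G) (tgt G) (wt G) (ind B) \<and>
           vmeasure G \<Omega> = sum (vmeas G) B \<and> vmeasure G (gpoints G - \<Omega>) = sum (vmeas G) (verts G - B)"
proof -
  have finV: "finite (verts G)" and mpos: "\<forall>v\<in>verts G. vmeas G v > 0" using cg unfolding closed_graph_def by auto
  have p1: "sum (vmeas G) B > 0" using finV BV Bne mpos by (intro sum_pos) (auto intro: finite_subset)
  have p2: "sum (vmeas G) (verts G - B) > 0" using finV VB mpos by (intro sum_pos) auto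
  note OB = OmegaB[OF cg BV]
  show ?thesis
    by (rule bexI[of _ "{x\<in>gpoints G. lin G (ind B) x > 1/2}"]) (use OB p1 p2 in \<open>auto simp: AdmS_def\<close>)
qed

lemma INF_exact:
  fixes N :: "real \<Rightarrow> real"
  assumes "\<forall>a. N a * F \<ge> 1" "\<exists>a. N a * F \<le> 1" "F > 0" "\<forall>a. N a \<ge> 0"
  shows "(INF a. N a) = 1 / F"
proof (rule antisym)
  obtain a0 where a0: "N a0 * F \<le> 1" using assms by blast
  have "(INF a. N a) \<le> N a0" by (rule cINF_lower) (use assms(4) in \<open>auto intro: bdd_belowI2\<close>)
  also have "\<dots> \<le> 1 / F" using a0 assms(3) by (simp add: field_simps)
  finally show "(INF a. N a) \<le> 1 / F" .
  show "1 / F \<le> (INF a. N a)"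
    by (rule cINF_greatest) (use assms in \<open>auto simp: field_simps\<close>)
qed

lemma INF_le_any:
  fixes N :: "real \<Rightarrow> real"
  assumes "\<forall>a. N a \<ge> 0"
  shows "(INF a. N a) \<le> N a0"
  by (rule cINF_lower) (use assms in \<open>auto intro: bdd_belowI2\<close>)

lemma nonconst_B:
  assumes finV: "finite V" and mpos: "\<forall>v\<in>V. m v > 0" and q: "goodq q"
    and pos: "0 < (INF a. nrm V m q (\<lambda>v. \<phi> v - a))"
  shows "\<exists>B. B \<subseteq> V \<and> B \<noteq> {} \<and> V - B \<noteq> {}"
proof (rule ccontr)
  assume nB: "\<nexists>B. B \<subseteq> V \<and> B \<noteq> {} \<and> V - B \<noteq> {}"
  have const: "\<forall>v\<in>V. \<forall>w\<in>V. \<phi> v = \<phi> w"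
  proof (intro ballI, rule ccontr)
    fix v w assume v: "v \<in> V" and w: "w \<in> V" and ne: "\<phi> v \<noteq> \<phi> w"
    let ?B = "{u\<in>V. \<phi> u = \<phi> v}"
    have "?B \<subseteq> V" by auto
    moreover have "v \<in> ?B" using v by simp
    moreover have "w \<in> V - ?B" using w ne by simp
    ultimately show False using nB by blast
  qed
  obtain a where "\<forall>v\<in>V. \<phi> v = a"
  proof (cases "V = {}")
    case False then obtain v0 where "v0 \<in> V" by auto
    then show ?thesis using that const by blast
  qed auto
  then have "nrm V m q (\<lambda>v. \<phi> v - a) = 0" by (intro nrm_zero[OF finV mpos q]) auto
  moreover have "(INF a. nrm V m q (\<lambda>v. \<phi> v - a)) \<le> nrm V m q (\<lambda>v. \<phi> v - a)"
    by (rule INF_le_any) (use nrm_nonneg[OF finV] in auto)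
  ultimately show False using pos by simp
qed



lemma ereal_cases_fin:
  fixes X :: ereal
  assumes "X \<le> ereal t" "0 \<le> X"
  obtains c where "X = ereal c" "c \<ge> 0"
proof -
  have "X \<noteq> \<infinity>" "X \<noteq> -\<infinity>" using assms by auto
  then obtain c where "X = ereal c" by (cases X) auto
  then show ?thesis using that assms by auto
qed

lemma main1:
  assumes cg: "closed_graph G" and nu: "1 \<le> \<nu>"
  shows "Itilde' G \<nu> = Stilde G \<nu>"
proof -
  define V where "V = verts G"
  define m where "m = vmeas G"
  define q where "q = dual_exp \<nu>"
  define Ds where "Ds = Dsum (edges G) (src G) (tgt G) (wt G)"
  have finV: "finite V" and mpos: "\<forall>v\<in>V. m v > 0"
    and st: "\<forall>e\<in>edges G. src G e \<in> V \<and> tgt G e \<in> V" and wnn: "\<forall>e\<in>edges G. wt G e \<ge> 0"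
    using cg unfolding closed_graph_def V_def m_def by (auto intro: less_imp_le)
  have q: "goodq q" unfolding q_def by (rule dual_good[OF nu])
  have Dsnn: "\<And>\<phi>. Ds \<phi> \<ge> 0" unfolding Ds_def by (rule Dsum_nonneg[OF wnn])
  have Nnn: "\<And>\<phi>. nrm V m q \<phi> \<ge> 0" by (rule nrm_nonneg[OF finV])
  have vn: "\<And>f. vnorm G q f = nrm V m q (\<lambda>v. f (VertPt v))" unfolding V_def m_def by (rule vnorm_nrm)
  have termpos: "\<And>\<Omega>. \<Omega> \<in> AdmS G \<Longrightarrow> Fp \<nu> (vmeasure G \<Omega>) (vmeasure G (gpoints G - \<Omega>)) > 0 \<and>
                    0 \<le> area G \<Omega>"
  proof -
    fix \<Omega> assume O: "\<Omega> \<in> AdmS G"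
    note AF = Adm_facts[OF cg O]
    have "Fp \<nu> (vmeasure G \<Omega>) (vmeasure G (gpoints G - \<Omega>)) > 0"
      unfolding AF(4,5) using G_exact(1)[OF nu finV[unfolded V_def] mpos[unfolded V_def m_def] AF(1,2,3)] by simp
    moreover have "0 \<le> area G \<Omega>" using AF(6) Dsnn[unfolded Ds_def] order_trans by blast
    ultimately show "?thesis \<Omega>" by simp
  qed
  show ?thesis
  proof (rule antisym)
    show "Itilde' G \<nu> \<le> Stilde G \<nu>"
      unfolding Stilde_def
    proof (rule INF_greatest)
      fix f assume "f \<in> {f \<in> C1Dir G. 0 < (INF a. vnorm G (dual_exp \<nu>) (\<lambda>x. f x - a))}"
      then have f: "f \<in> C1Dir G" and Npos0: "0 < (INF a. vnorm G q (\<lambda>x. f x - a))" unfolding q_def by auto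
      define \<phi> where "\<phi> = (\<lambda>v. f (VertPt v))"
      define Nf where "Nf = (INF a. nrm V m q (\<lambda>v. \<phi> v - a))"
      have NfE: "(INF a. vnorm G q (\<lambda>x. f x - a)) = Nf" unfolding Nf_def \<phi>_def vn ..
      have Npos: "Nf > 0" using Npos0 NfE by simp
      obtain B0 where B0: "B0 \<subseteq> V" "B0 \<noteq> {}" "V - B0 \<noteq> {}"
        using nonconst_B[OF finV mpos q Npos[unfolded Nf_def]] by blast
      obtain \<Omega>0 where O0: "\<Omega>0 \<in> AdmS G" using OmegaB_Adm[OF cg B0[unfolded V_def]] by blast
      have le0: "Itilde' G \<nu> \<le> ereal (area G \<Omega>0 * Fp \<nu> (vmeasure G \<Omega>0) (vmeasure G (gpoints G - \<Omega>0)))"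
        unfolding Itilde'_eq by (rule INF_lower[OF O0])
      have ge0: "0 \<le> Itilde' G \<nu>"
        unfolding Itilde'_eq
      proof (rule INF_greatest)
        fix \<Omega> assume "\<Omega> \<in> AdmS G"
        from termpos[OF this] have "0 \<le> area G \<Omega> * Fp \<nu> (vmeasure G \<Omega>) (vmeasure G (gpoints G - \<Omega>))"
          by (intro mult_nonneg_nonneg) auto
        then show "0 \<le> ereal (area G \<Omega> * Fp \<nu> (vmeasure G \<Omega>) (vmeasure G (gpoints G - \<Omega>)))" by simp
      qed
      obtain c where c: "Itilde' G \<nu> = ereal c" "c \<ge> 0" using ereal_cases_fin[OF le0 ge0] by blast
      have hyp: "\<And>B. B \<subseteq> V \<Longrightarrow> B \<noteq> {} \<Longrightarrow> V - B \<noteq> {} \<Longrightarrow> \<exists>b. c * nrm V m q (\<lambda>v. ind B v - b) \<le> Ds (ind B)"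
      proof -
        fix B assume BV: "B \<subseteq> V" and Bne: "B \<noteq> {}" and VB: "V - B \<noteq> {}"
        obtain \<Omega> where O: "\<Omega> \<in> AdmS G" and ar: "area G \<Omega> \<le> Ds (ind B)"
          and mO: "vmeasure G \<Omega> = sum m B" "vmeasure G (gpoints G - \<Omega>) = sum m (V - B)"
          using OmegaB_Adm[OF cg BV[unfolded V_def] Bne VB[unfolded V_def]] unfolding Ds_def V_def m_def by blast
        note GE = G_exact[OF nu finV mpos BV Bne VB]
        define F where "F = Fp \<nu> (sum m B) (sum m (V - B))"
        have F: "F > 0" using GE(1) unfolding F_def q_def by simp
        have "ereal c \<le> ereal (area G \<Omega> * F)" unfolding c(1)[symmetric] Itilde'_eq F_def mO[symmetric]
          by (rule INF_lower[OF O])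
        then have "c \<le> area G \<Omega> * F" by simp
        also have "\<dots> \<le> Ds (ind B) * F" using ar F by simp
        finally have cF: "c \<le> Ds (ind B) * F" .
        obtain b where b: "nrm V m q (\<lambda>v. ind B v - b) * F \<le> 1" using GE(3) unfolding F_def q_def by blast
        have "c * nrm V m q (\<lambda>v. ind B v - b) \<le> Ds (ind B) * F * nrm V m q (\<lambda>v. ind B v - b)"
          using cF Nnn by (intro mult_right_mono) auto
        also have "\<dots> = Ds (ind B) * (nrm V m q (\<lambda>v. ind B v - b) * F)" by simp
        also have "\<dots> \<le> Ds (ind B) * 1" using b Dsnn by (intro mult_left_mono) auto
        finally show "\<exists>b. c * nrm V m q (\<lambda>v. ind B v - b) \<le> Ds (ind B)" by auto
      qed
      have "\<exists>a. c * nrm V m q (\<lambda>v. \<phi> v - a) \<le> Ds \<phi>"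
        unfolding Ds_def
        by (rule layer_cake_general[OF finV st wnn nrm_cong nrm_tri[OF finV mpos q] nrm_hom[OF finV mpos q] c(2)])
           (simp, rule hyp[unfolded Ds_def], auto)
      then obtain a where a: "c * nrm V m q (\<lambda>v. \<phi> v - a) \<le> Ds \<phi>" by blast
      have "Nf \<le> nrm V m q (\<lambda>v. \<phi> v - a)" unfolding Nf_def by (rule INF_le_any) (use Nnn in auto)
      then have "c * Nf \<le> c * nrm V m q (\<lambda>v. \<phi> v - a)" using c(2) by (rule mult_left_mono)
      also have "\<dots> \<le> Ds \<phi>" by (rule a)
      also have "\<dots> \<le> grad_norm1 G f" unfolding Ds_def \<phi>_def by (rule grad_lower[OF cg f])
      finally have "c \<le> grad_norm1 G f / Nf" using Npos by (simp add: field_simps)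
      then show "Itilde' G \<nu> \<le> ereal (grad_norm1 G f / (INF a. vnorm G (dual_exp \<nu>) (\<lambda>x. f x - a)))"
        using c(1) NfE unfolding q_def by simp
    qed
  next
    show "Stilde G \<nu> \<le> Itilde' G \<nu>"
      unfolding Itilde'_eq
    proof (rule INF_greatest)
      fix \<Omega> assume O: "\<Omega> \<in> AdmS G"
      define B where "B = {v\<in>verts G. VertPt v \<in> \<Omega>}"
      note AF = Adm_facts[OF cg O, folded B_def]
      have BV: "B \<subseteq> V" and Bne: "B \<noteq> {}" and VB: "V - B \<noteq> {}" using AF unfolding V_def by auto
      note GE = G_exact[OF nu finV mpos BV Bne VB]
      define F where "F = Fp \<nu> (sum m B) (sum m (V - B))"
      have F: "F > 0" using GE(1) unfolding F_def by simp
      define f where "f = lin G (ind B)"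
      have fC: "f \<in> C1Dir G" unfolding f_def by (rule lin_C1Dir[OF cg])
      have Nf: "(INF a. vnorm G q (\<lambda>x. f x - a)) = 1 / F"
        unfolding vn f_def lin_V
        by (rule INF_exact) (use GE Nnn in \<open>auto simp: F_def q_def\<close>)
      have "Stilde G \<nu> \<le> ereal (grad_norm1 G f / (INF a. vnorm G q (\<lambda>x. f x - a)))"
        unfolding Stilde_def q_def by (rule INF_lower) (use fC Nf F in \<open>auto simp: q_def\<close>)
      also have "grad_norm1 G f / (INF a. vnorm G q (\<lambda>x. f x - a)) = Ds (ind B) * F"
      proof -
        have "grad_norm1 G f = Ds (ind B)" unfolding f_def lin_grad[OF cg] Ds_def ..
        then show ?thesis using Nf by simp
      qed
      also have "\<dots> \<le> area G \<Omega> * F" using AF(6) F unfolding Ds_def by simp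
      finally show "Stilde G \<nu> \<le> ereal (area G \<Omega> * Fp \<nu> (vmeasure G \<Omega>) (vmeasure G (gpoints G - \<Omega>)))"
        unfolding AF(4,5) F_def V_def m_def by simp
    qed
  qed
qed



lemma halfset:
  fixes m :: "'v \<Rightarrow> real"
  assumes finV: "finite V" and mpos: "\<forall>v\<in>V. m v > 0" and BV: "B \<subseteq> V" and Bne: "B \<noteq> {}"
    and half: "sum m B \<le> sum m V / 2"
  shows "V - B \<noteq> {}" "sum m B \<le> sum m (V - B)" "sum m B > 0"
proof -
  have tot: "sum m V = sum m B + sum m (V - B)" by (rule sum_split_B[OF finV BV])
  show pos: "sum m B > 0" using finV BV Bne mpos by (intro sum_pos) (auto intro: finite_subset)
  show le: "sum m B \<le> sum m (V - B)" using tot half by simp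
  show "V - B \<noteq> {}"
  proof
    assume "V - B = {}"
    then have "sum m (V - B) = 0" by (metis sum.empty)
    then show False using le pos by simp
  qed
qed

lemma Ds_compl:
  assumes st: "\<forall>e\<in>E. s e \<in> V \<and> t e \<in> V"
  shows "Dsum E s t w (ind (V - B)) = Dsum E s t w (ind B)"
  unfolding Dsum_def
proof (rule sum.cong[OF refl])
  fix e assume "e \<in> E"
  then have "s e \<in> V" "t e \<in> V" using st by auto
  then show "w e * \<bar>ind (V - B) (s e) - ind (V - B) (t e)\<bar> = w e * \<bar>ind B (s e) - ind B (t e)\<bar>"
    by (auto simp: ind_def)
qed

lemma main2:
  assumes cg: "closed_graph G" and nu: "1 \<le> \<nu>"
  shows "Itilde G \<nu> = Stilde_split G \<nu>"
proof -
  define V where "V = verts G"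
  define m where "m = vmeas G"
  define q where "q = dual_exp \<nu>"
  define Ds where "Ds = Dsum (edges G) (src G) (tgt G) (wt G)"
  have finV: "finite V" and mpos: "\<forall>v\<in>V. m v > 0"
    and st: "\<forall>e\<in>edges G. src G e \<in> V \<and> tgt G e \<in> V" and wnn: "\<forall>e\<in>edges G. wt G e \<ge> 0"
    using cg unfolding closed_graph_def V_def m_def by (auto intro: less_imp_le)
  have q: "goodq q" unfolding q_def by (rule dual_good[OF nu])
  have ri: "inv_exp \<nu> - 1 = - rinv q" unfolding q_def by (rule rinv_dual[OF nu])
  have Dsnn: "\<And>\<phi>. Ds \<phi> \<ge> 0" unfolding Ds_def by (rule Dsum_nonneg[OF wnn])
  have Nnn: "\<And>\<phi>. nrm V m q \<phi> \<ge> 0" by (rule nrm_nonneg[OF finV])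
  have vn: "\<And>f. vnorm G q f = nrm V m q (\<lambda>v. f (VertPt v))" unfolding V_def m_def by (rule vnorm_nrm)
  define tot where "tot = sum m V"
  have vmtot: "vmeasure G (gpoints G) = tot" unfolding tot_def V_def m_def vmeasure_eq by simp
  have vmf: "\<And>f P. vmeasure G {x. P (f x)} = sum m {v\<in>V. P (f (VertPt v))}"
    unfolding V_def m_def vmeasure_eq by simp
  show ?thesis
  proof (rule antisym)
    show "Itilde G \<nu> \<le> Stilde_split G \<nu>"
      unfolding Stilde_split_def
    proof (rule INF_greatest)
      fix f assume "f \<in> {f \<in> C1Dir G. split_fun G f \<and> 0 < vnorm G (dual_exp \<nu>) f}"
      then have f: "f \<in> C1Dir G" and sp: "split_fun G f" and Npos0: "0 < vnorm G q f" unfolding q_def by auto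
      define \<phi> where "\<phi> = (\<lambda>v. f (VertPt v))"
      have NfE: "vnorm G q f = nrm V m q \<phi>" unfolding \<phi>_def vn ..
      have Npos: "nrm V m q \<phi> > 0" using Npos0 NfE by simp
      define P where "P = (\<lambda>B. B \<subseteq> V \<and> sum m B \<le> tot / 2)"
      have P1: "P {v\<in>V. \<phi> v > 0}" using sp unfolding split_fun_def P_def vmtot vmf[of "\<lambda>x. x > 0" f] \<phi>_def by auto
      have P2: "P {v\<in>V. \<phi> v < 0}" using sp unfolding split_fun_def P_def vmtot vmf[of "\<lambda>x. x < 0" f] \<phi>_def by auto
      have Pmono: "\<And>B B'. B' \<subseteq> B \<Longrightarrow> P B \<Longrightarrow> P B'"
      proof -
        fix B B' assume sub: "B' \<subseteq> B" and PB: "P B"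
        then have BV: "B \<subseteq> V" unfolding P_def by auto
        have "sum m B' \<le> sum m B"
          using sub BV finV mpos by (intro sum_mono2) (auto intro: finite_subset less_imp_le)
        then show "P B'" using PB sub unfolding P_def by auto
      qed
      obtain v0 where v0: "v0 \<in> V" "\<phi> v0 \<noteq> 0"
      proof (rule ccontr)
        assume "\<not> thesis"
        then have "\<forall>v\<in>V. \<phi> v = 0" using that by blast
        then have "nrm V m q \<phi> = 0" by (rule nrm_zero[OF finV mpos q])
        then show False using Npos by simp
      qed
      obtain B0 where B0: "P B0" "B0 \<noteq> {}"
      proof (cases "\<phi> v0 > 0")
        case True then show ?thesis using that[OF P1] v0 by blast
      next
        case False then have "\<phi> v0 < 0" using v0 by simp
        then show ?thesis using that[OF P2] v0 by blast
      qed
      have B0V: "B0 \<subseteq> V" using B0 unfolding P_def by auto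
      note H0 = halfset[OF finV mpos B0V B0(2) B0(1)[unfolded P_def tot_def, THEN conjunct2]]
      obtain \<Omega>0 where O0: "\<Omega>0 \<in> AdmS G" using OmegaB_Adm[OF cg B0V[unfolded V_def] B0(2) H0(1)[unfolded V_def]] by blast
      have le0: "Itilde G \<nu> \<le> ereal (area G \<Omega>0 * min (vmeasure G \<Omega>0) (vmeasure G (gpoints G - \<Omega>0)) powr (inv_exp \<nu> - 1))"
        unfolding Itilde_eq by (rule INF_lower[OF O0])
      have ge0: "0 \<le> Itilde G \<nu>"
        unfolding Itilde_eq
      proof (rule INF_greatest)
        fix \<Omega> assume O: "\<Omega> \<in> AdmS G"
        have "0 \<le> area G \<Omega>" using Adm_facts(6)[OF cg O] Dsnn[unfolded Ds_def] order_trans by blast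
        then have "0 \<le> area G \<Omega> * min (vmeasure G \<Omega>) (vmeasure G (gpoints G - \<Omega>)) powr (inv_exp \<nu> - 1)"
          by simp
        then show "0 \<le> ereal (area G \<Omega> * min (vmeasure G \<Omega>) (vmeasure G (gpoints G - \<Omega>)) powr (inv_exp \<nu> - 1))" by simp
      qed
      obtain c where c: "Itilde G \<nu> = ereal c" "c \<ge> 0" using ereal_cases_fin[OF le0 ge0] by blast
      have hyp: "\<And>B. B \<subseteq> V \<Longrightarrow> B \<noteq> {} \<Longrightarrow> P B \<Longrightarrow> c * nrm V m q (ind B) \<le> Ds (ind B)"
      proof -
        fix B assume BV: "B \<subseteq> V" and Bne: "B \<noteq> {}" and PB: "P B"
        note HB = halfset[OF finV mpos BV Bne PB[unfolded P_def tot_def, THEN conjunct2]]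
        obtain \<Omega> where O: "\<Omega> \<in> AdmS G" and ar: "area G \<Omega> \<le> Ds (ind B)"
          and mO: "vmeasure G \<Omega> = sum m B" "vmeasure G (gpoints G - \<Omega>) = sum m (V - B)"
          using OmegaB_Adm[OF cg BV[unfolded V_def] Bne HB(1)[unfolded V_def]] unfolding Ds_def V_def m_def by blast
        define mB where "mB = sum m B"
        have mB: "mB > 0" unfolding mB_def by (rule HB(3))
        have mn: "min (sum m B) (sum m (V - B)) = mB" using HB(2) unfolding mB_def by simp
        have "ereal c \<le> ereal (area G \<Omega> * min (vmeasure G \<Omega>) (vmeasure G (gpoints G - \<Omega>)) powr (inv_exp \<nu> - 1))"
          unfolding c(1)[symmetric] Itilde_eq by (rule INF_lower[OF O])
        then have "ereal c \<le> ereal (area G \<Omega> * mB powr (- rinv q))"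
          unfolding mO mn ri .
        then have "c \<le> area G \<Omega> * mB powr (- rinv q)" by simp
        also have "\<dots> \<le> Ds (ind B) * mB powr (- rinv q)" using ar by (intro mult_right_mono) auto
        finally have cle: "c \<le> Ds (ind B) * mB powr (- rinv q)" .
        have N: "nrm V m q (ind B) = mB powr rinv q" unfolding mB_def by (rule nrm_ind[OF finV BV Bne q mpos])
        have "c * nrm V m q (ind B) \<le> Ds (ind B) * mB powr (- rinv q) * mB powr rinv q"
          unfolding N using cle by (intro mult_right_mono) auto
        also have "\<dots> = Ds (ind B) * (mB powr (- rinv q) * mB powr rinv q)" by simp
        also have "mB powr (- rinv q) * mB powr rinv q = 1" using mB by (simp add: powr_add[symmetric])
        finally show "c * nrm V m q (ind B) \<le> Ds (ind B)" by simp
      qed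
      have "c * nrm V m q \<phi> \<le> Dsum (edges G) (src G) (tgt G) (wt G) \<phi>"
      proof (rule layer_cake_split[where P=P and N="nrm V m q" and V=V])
        show "finite V" by (rule finV)
        show "\<forall>e\<in>edges G. src G e \<in> V \<and> tgt G e \<in> V" by (rule st)
        show "\<forall>e\<in>edges G. 0 \<le> wt G e" by (rule wnn)
        show "\<And>\<phi> \<psi>. \<forall>v\<in>V. \<phi> v = \<psi> v \<Longrightarrow> nrm V m q \<phi> = nrm V m q \<psi>" by (rule nrm_cong)
        show "\<And>\<phi> \<psi>. nrm V m q (\<lambda>v. \<phi> v + \<psi> v) \<le> nrm V m q \<phi> + nrm V m q \<psi>" by (rule nrm_tri[OF finV mpos q])
        show "\<And>c \<phi>. nrm V m q (\<lambda>v. c * \<phi> v) = \<bar>c\<bar> * nrm V m q \<phi>" by (rule nrm_hom[OF finV mpos q])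
        show "0 \<le> c" by (rule c(2))
        show "\<And>B B'. B' \<subseteq> B \<Longrightarrow> P B \<Longrightarrow> P B'" by (rule Pmono)
        show "\<And>B. B \<subseteq> V \<Longrightarrow> B \<noteq> {} \<Longrightarrow> P B \<Longrightarrow> c * nrm V m q (ind B) \<le> Dsum (edges G) (src G) (tgt G) (wt G) (ind B)"
          using hyp unfolding Ds_def by blast
        show "P {v \<in> V. 0 < \<phi> v}" by (rule P1)
        show "P {v \<in> V. \<phi> v < 0}" by (rule P2)
      qed
      then have "c * nrm V m q \<phi> \<le> Ds \<phi>" unfolding Ds_def .
      also have "\<dots> \<le> grad_norm1 G f" unfolding Ds_def \<phi>_def by (rule grad_lower[OF cg f])
      finally have "c \<le> grad_norm1 G f / nrm V m q \<phi>" using Npos by (simp add: field_simps)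
      then show "Itilde G \<nu> \<le> ereal (grad_norm1 G f / vnorm G (dual_exp \<nu>) f)"
        using c(1) NfE unfolding q_def by simp
    qed
  next
    show "Stilde_split G \<nu> \<le> Itilde G \<nu>"
      unfolding Itilde_eq
    proof (rule INF_greatest)
      fix \<Omega> assume O: "\<Omega> \<in> AdmS G"
      define B where "B = {v\<in>verts G. VertPt v \<in> \<Omega>}"
      note AF = Adm_facts[OF cg O, folded B_def]
      have BV: "B \<subseteq> V" and Bne: "B \<noteq> {}" and VB: "V - B \<noteq> {}" using AF unfolding V_def by auto
      define mB where "mB = sum m B"
      define mBc where "mBc = sum m (V - B)"
      have mBp: "mB > 0" unfolding mB_def using finV BV Bne mpos by (intro sum_pos) (auto intro: finite_subset)
      have mBcp: "mBc > 0" unfolding mBc_def using finV VB mpos by (intro sum_pos) auto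
      have tot: "tot = mB + mBc" unfolding tot_def mB_def mBc_def by (rule sum_split_B[OF finV BV])
      define B' where "B' = (if mB \<le> mBc then B else V - B)"
      have B'V: "B' \<subseteq> V" unfolding B'_def using BV by auto
      have B'ne: "B' \<noteq> {}" unfolding B'_def using Bne VB by auto
      have mB': "sum m B' = min mB mBc" unfolding B'_def mB_def mBc_def by auto
      have DsB': "Ds (ind B') = Ds (ind B)" unfolding B'_def Ds_def using Ds_compl[OF st] by auto
      define f where "f = lin G (ind B')"
      have fC: "f \<in> C1Dir G" unfolding f_def by (rule lin_C1Dir[OF cg])
      have s1: "{v\<in>V. f (VertPt v) > 0} = B'" using B'V unfolding f_def by (auto simp: ind_def)
      have s2: "{v\<in>V. f (VertPt v) < 0} = {}" unfolding f_def by (auto simp: ind_def)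
      have spl: "split_fun G f"
        unfolding split_fun_def vmtot vmf[of "\<lambda>x. x > 0" f] vmf[of "\<lambda>x. x < 0" f] s1 s2 mB' tot
        using mBp mBcp by auto
      have Nf: "vnorm G q f = min mB mBc powr rinv q"
        unfolding vn f_def lin_V nrm_ind[OF finV B'V B'ne q mpos] mB' ..
      have Nfp: "vnorm G q f > 0" unfolding Nf using mBp mBcp by simp
      have "Stilde_split G \<nu> \<le> ereal (grad_norm1 G f / vnorm G q f)"
        unfolding Stilde_split_def q_def by (rule INF_lower) (use fC spl Nfp in \<open>auto simp: q_def\<close>)
      also have "grad_norm1 G f / vnorm G q f = Ds (ind B) * min mB mBc powr (- rinv q)"
      proof -
        have "grad_norm1 G f = Ds (ind B)" unfolding f_def lin_grad[OF cg] Ds_def[symmetric] DsB' ..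
        then show ?thesis unfolding Nf by (simp add: powr_minus_divide)
      qed
      also have "\<dots> \<le> area G \<Omega> * min mB mBc powr (- rinv q)"
        using AF(6) unfolding Ds_def by (intro mult_right_mono) auto
      finally show "Stilde_split G \<nu> \<le> ereal (area G \<Omega> * min (vmeasure G \<Omega>) (vmeasure G (gpoints G - \<Omega>)) powr (inv_exp \<nu> - 1))"
        unfolding AF(4,5) ri mB_def mBc_def V_def m_def by simp
    qed
  qed
qed

lemma scalar_bounds:
  fixes x y :: real
  assumes x: "x > 0" and y: "y > 0" and nu: "1 \<le> \<nu>"
  shows "min x y powr (inv_exp \<nu> - 1) \<le> Fp \<nu> x y"
    and "Fp \<nu> x y \<le> 2 powr inv_exp \<nu> * min x y powr (inv_exp \<nu> - 1)"
proof -
  define mn where "mn = min x y"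
  have mn: "mn > 0" "mn \<le> x" "mn \<le> y" "mn = x \<or> mn = y" unfolding mn_def using x y by auto
  have "min x y powr (inv_exp \<nu> - 1) \<le> Fp \<nu> x y \<and> Fp \<nu> x y \<le> 2 powr inv_exp \<nu> * min x y powr (inv_exp \<nu> - 1)"
  proof (cases "\<nu> = \<infinity>")
    case True
    have "mn powr (- 1) = 1 / mn" using mn by (simp add: powr_minus_divide)
    then show ?thesis using True unfolding mn_def by (simp add: Fp_def inv_exp_def)
  next
    case False
    then obtain p where p: "\<nu> = ereal p" using nu by (cases \<nu>) auto
    have p1: "p \<ge> 1" using nu p by simp
    have ie: "inv_exp \<nu> = 1 / p" using p by (simp add: inv_exp_def)
    have F: "Fp \<nu> x y = (x powr (1 - p) + y powr (1 - p)) powr (1 / p)" using p by (simp add: Fp_def)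
    have ax: "x powr (1 - p) \<le> mn powr (1 - p)" using mn p1 by (intro powr_mono2') auto
    have ay: "y powr (1 - p) \<le> mn powr (1 - p)" using mn p1 by (intro powr_mono2') auto
    have lo: "mn powr (1 - p) \<le> x powr (1 - p) + y powr (1 - p)" using mn(4) by auto
    have hi: "x powr (1 - p) + y powr (1 - p) \<le> 2 * mn powr (1 - p)" using ax ay by simp
    have e1: "(mn powr (1 - p)) powr (1 / p) = mn powr (1 / p - 1)"
      using p1 by (simp add: powr_powr field_simps)
    have e2: "(2 * mn powr (1 - p)) powr (1 / p) = 2 powr (1/p) * mn powr (1 / p - 1)"
      using e1 by (simp add: powr_mult)
    have "mn powr (1 / p - 1) \<le> (x powr (1 - p) + y powr (1 - p)) powr (1 / p)"
      unfolding e1[symmetric] using lo p1 by (intro powr_mono2) auto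
    moreover have "(x powr (1 - p) + y powr (1 - p)) powr (1 / p) \<le> 2 powr (1/p) * mn powr (1 / p - 1)"
      unfolding e2[symmetric] using hi p1 by (intro powr_mono2) auto
    ultimately show ?thesis unfolding F ie mn_def by simp
  qed
  then show "min x y powr (inv_exp \<nu> - 1) \<le> Fp \<nu> x y"
    and "Fp \<nu> x y \<le> 2 powr inv_exp \<nu> * min x y powr (inv_exp \<nu> - 1)" by auto
qed

lemma main3:
  assumes cg: "closed_graph G" and nu: "1 \<le> \<nu>"
  shows "Itilde G \<nu> \<le> Itilde' G \<nu>" and "Itilde' G \<nu> \<le> ereal (2 powr inv_exp \<nu>) * Itilde G \<nu>"
proof -
  define T where "T = (\<lambda>\<Omega>. area G \<Omega> * min (vmeasure G \<Omega>) (vmeasure G (gpoints G - \<Omega>)) powr (inv_exp \<nu> - 1))"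
  define T' where "T' = (\<lambda>\<Omega>. area G \<Omega> * Fp \<nu> (vmeasure G \<Omega>) (vmeasure G (gpoints G - \<Omega>)))"
  define k where "k = 2 powr inv_exp \<nu>"
  have wnn: "\<forall>e\<in>edges G. wt G e \<ge> 0" using cg unfolding closed_graph_def by (auto intro: less_imp_le)
  have pt: "\<And>\<Omega>. \<Omega> \<in> AdmS G \<Longrightarrow> T \<Omega> \<le> T' \<Omega> \<and> T' \<Omega> \<le> k * T \<Omega>"
  proof -
    fix \<Omega> assume O: "\<Omega> \<in> AdmS G"
    have a: "0 \<le> area G \<Omega>" using Adm_facts(6)[OF cg O] Dsum_nonneg[OF wnn] order_trans by blast
    have x: "vmeasure G \<Omega> > 0" and y: "vmeasure G (gpoints G - \<Omega>) > 0" using O unfolding AdmS_def by auto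
    note sb = scalar_bounds[OF x y nu]
    have "T \<Omega> \<le> T' \<Omega>" unfolding T_def T'_def using a sb(1) by (intro mult_left_mono) auto
    moreover have "T' \<Omega> \<le> area G \<Omega> * (k * min (vmeasure G \<Omega>) (vmeasure G (gpoints G - \<Omega>)) powr (inv_exp \<nu> - 1))"
      unfolding T'_def k_def using a sb(2) by (intro mult_left_mono) auto
    ultimately show "T \<Omega> \<le> T' \<Omega> \<and> T' \<Omega> \<le> k * T \<Omega>" unfolding T_def by (simp add: algebra_simps)
  qed
  have I: "Itilde G \<nu> = (INF \<Omega>\<in>AdmS G. ereal (T \<Omega>))" unfolding Itilde_eq T_def ..
  have I': "Itilde' G \<nu> = (INF \<Omega>\<in>AdmS G. ereal (T' \<Omega>))" unfolding Itilde'_eq T'_def ..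
  show "Itilde G \<nu> \<le> Itilde' G \<nu>" unfolding I I'
    by (rule INF_mono) (use pt in auto)
  have kpos: "k > 0" unfolding k_def by simp
  have "ereal k * Itilde G \<nu> = Inf {ereal k * x |x. x \<in> (\<lambda>\<Omega>. ereal (T \<Omega>)) ` AdmS G}"
    unfolding I using ereal_Inf_cmult[OF kpos, of "\<lambda>x. x \<in> (\<lambda>\<Omega>. ereal (T \<Omega>)) ` AdmS G"] by simp
  also have "{ereal k * x |x. x \<in> (\<lambda>\<Omega>. ereal (T \<Omega>)) ` AdmS G} = (\<lambda>\<Omega>. ereal (k * T \<Omega>)) ` AdmS G"
    unfolding setcompr_eq_image by (simp add: image_comp o_def)
  finally have kI: "ereal k * Itilde G \<nu> = (INF \<Omega>\<in>AdmS G. ereal (k * T \<Omega>))" .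
  show "Itilde' G \<nu> \<le> ereal (2 powr inv_exp \<nu>) * Itilde G \<nu>" unfolding k_def[symmetric] kI I'
    by (rule INF_mono) (use pt in auto)
qed

theorem mainTheorem4:
  fixes G :: "('v, 'e) mgraph" and \<nu> :: ereal
  assumes "closed_graph G" and "1 \<le> \<nu>"
  shows "Itilde' G \<nu> = Stilde G \<nu> \<and> Itilde G \<nu> = Stilde_split G \<nu> \<and>
         Itilde G \<nu> \<le> Itilde' G \<nu> \<and> Itilde' G \<nu> \<le> ereal (2 powr inv_exp \<nu>) * Itilde G \<nu>"
  using main1[OF assms] main2[OF assms] main3[OF assms] by blast

end
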